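(* Let $X$, $Y$ be disjoint sets of cardinality at least two, let $T$ be the $(|X|,|Y|)$-biregular tree, let $M \le \mathrm{Sym}(X)$ and $N \le \mathrm{Sym}(Y)$ be permutation groups, and let $c$ be a legal colouring of $X$ and $Y$. Then: (1) a subset $\Delta \subseteq X \cup Y$ is an orbit of $M$ or of $N$ if and only if $t(c^{-1}(\Delta)) = \{t(a) : a \in AT,\ c(a) \in \Delta\}$ is an orbit of $U_c(M,N)$ on $VT$; (2) for any two legal colourings $c, c'$ of $X$ and $Y$, the groups $U_c(M,N)$ and $U_{c'}(M,N)$ are conjugate in $\mathrm{Aut}(T)$; (3) if $M$ and $N$ are transitive and $H \le \mathrm{Aut}(T)$ is locally-$(M,N)$, then $H \le U_{c''}(M,N)$ for some legal colouring $c''$; (4) $U_c(M,N)$ is locally-$(M,N)$; (5) if $M$ and $N$ are closed (in the permutation topologies of $\mathrm{Sym}(X)$ and $\mathrm{Sym}(Y)$), then $U_c(M,N)$ is a closed subgroup of $\mathrm{Aut}(T)$.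
   Context: Permutations act on the left. $T$ has natural bipartition $VT = V_X\sqcup V_Y$ with vertices of $V_X$ of valency $|X|$ and vertices of $V_Y$ of valency $|Y|$. An arc is an ordered pair of adjacent vertices $a=(o(a),t(a))$; $AT$ is the set of arcs, $A(v)$ the arcs with origin $v$, $\overline{A}(v)$ the arcs with terminus $v$, $B(v)$ the set of neighbours of $v$. A legal colouring of $X$ and $Y$ is a map $c: AT\to X\cup Y$ such that $c|_{A(v)}:A(v)\to X$ is a bijection for $v\in V_X$, $c|_{A(v)}:A(v)\to Y$ is a bijection for $v\in V_Y$, and $c|_{\overline{A}(v)}$ is constant for each $v\in VT$. $U_c(M,N)$ is the group of all $g\in\mathrm{Aut}(T)$ with $gV_X=V_X$ such that $c|_{A(gv)}\circ g|_{A(v)}\circ (c|_{A(v)})^{-1}\in M$ for all $v\in V_X$ and $\in N$ for all $v\in V_Y$. A subgroup $H\le \mathrm{Aut}(T)$ is locally-$(M,N)$ if $H$ fixes $V_X$ and $V_Y$ setwise and, for every vertex $v$, the permutation group induced on $B(v)$ by the stabiliser $H_v$ is permutation isomorphic to $M$ if $v\in V_X$ and to $N$ if $v\in V_Y$. The permutation topology on a group of permutations of a set $V$ is the topology of pointwise convergence, with basic neighbourhoods of the identity the pointwise stabilisers of finite subsets of $V$; $\mathrm{Aut}(T)$ carries this topology as a group of permutations of $VT$. *)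

theory Defs
  imports "HOL-Analysis.Analysis" "HOL-Combinatorics.Permutations" "HOL-Library.Equipollence"
begin

text \<open>Graphs are given by an adjacency relation E on the vertex type 'v; the vertex set is UNIV.\<close>

definition is_path :: "('v \<Rightarrow> 'v \<Rightarrow> bool) \<Rightarrow> 'v list \<Rightarrow> bool" where
  "is_path E p \<longleftrightarrow> p \<noteq> [] \<and> distinct p \<and> (\<forall>i. Suc i < length p \<longrightarrow> E (p ! i) (p ! Suc i))"

definition is_tree :: "('v \<Rightarrow> 'v \<Rightarrow> bool) \<Rightarrow> bool" where
  "is_tree E \<longleftrightarrow> (\<forall>u v. \<not> E u u \<and> (E u v \<longrightarrow> E v u))
      \<and> (\<forall>u v. \<exists>!p. is_path E p \<and> hd p = u \<and> last p = v)"

definition nbrs :: "('v \<Rightarrow> 'v \<Rightarrow> bool) \<Rightarrow> 'v \<Rightarrow> 'v set" where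
  "nbrs E v = {u. E v u}"

definition biregular_tree ::
  "('v \<Rightarrow> 'v \<Rightarrow> bool) \<Rightarrow> 'v set \<Rightarrow> 'v set \<Rightarrow> 'c set \<Rightarrow> 'c set \<Rightarrow> bool" where
  "biregular_tree E VX VY X Y \<longleftrightarrow> is_tree E \<and> VX \<inter> VY = {} \<and> VX \<union> VY = UNIV
     \<and> (\<forall>u v. E u v \<longrightarrow> (u \<in> VX \<longleftrightarrow> v \<in> VY))
     \<and> (\<forall>v\<in>VX. nbrs E v \<approx> X) \<and> (\<forall>v\<in>VY. nbrs E v \<approx> Y)"

definition arcs :: "('v \<Rightarrow> 'v \<Rightarrow> bool) \<Rightarrow> ('v \<times> 'v) set" where
  "arcs E = {(u, v). E u v}"

definition out_arcs :: "('v \<Rightarrow> 'v \<Rightarrow> bool) \<Rightarrow> 'v \<Rightarrow> ('v \<times> 'v) set" where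
  "out_arcs E v = {a \<in> arcs E. fst a = v}"

definition in_arcs :: "('v \<Rightarrow> 'v \<Rightarrow> bool) \<Rightarrow> 'v \<Rightarrow> ('v \<times> 'v) set" where
  "in_arcs E v = {a \<in> arcs E. snd a = v}"

definition legal_colouring ::
  "('v \<Rightarrow> 'v \<Rightarrow> bool) \<Rightarrow> 'v set \<Rightarrow> 'v set \<Rightarrow> 'c set \<Rightarrow> 'c set \<Rightarrow> ('v \<times> 'v \<Rightarrow> 'c) \<Rightarrow> bool" where
  "legal_colouring E VX VY X Y c \<longleftrightarrow>
     (\<forall>v\<in>VX. bij_betw c (out_arcs E v) X) \<and> (\<forall>v\<in>VY. bij_betw c (out_arcs E v) Y)
     \<and> (\<forall>v. \<forall>a\<in>in_arcs E v. \<forall>b\<in>in_arcs E v. c a = c b)"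

text \<open>Sym(\<Omega>), realised as the permutations of the ambient type fixing everything outside \<Omega>.\<close>
definition Sym :: "'a set \<Rightarrow> ('a \<Rightarrow> 'a) set" where
  "Sym \<Omega> = {p. p permutes \<Omega>}"

definition perm_group :: "'a set \<Rightarrow> ('a \<Rightarrow> 'a) set \<Rightarrow> bool" where
  "perm_group \<Omega> G \<longleftrightarrow> G \<subseteq> Sym \<Omega> \<and> id \<in> G \<and> (\<forall>p\<in>G. \<forall>q\<in>G. p \<circ> q \<in> G) \<and> (\<forall>p\<in>G. inv p \<in> G)"

definition orbit :: "('a \<Rightarrow> 'a) set \<Rightarrow> 'a \<Rightarrow> 'a set" where
  "orbit G x = (\<lambda>g. g x) ` G"

definition is_orbit :: "'a set \<Rightarrow> ('a \<Rightarrow> 'a) set \<Rightarrow> 'a set \<Rightarrow> bool" where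
  "is_orbit \<Omega> G D \<longleftrightarrow> (\<exists>x\<in>\<Omega>. D = orbit G x)"

definition transitive_on :: "'a set \<Rightarrow> ('a \<Rightarrow> 'a) set \<Rightarrow> bool" where
  "transitive_on \<Omega> G \<longleftrightarrow> (\<forall>x\<in>\<Omega>. \<forall>y\<in>\<Omega>. \<exists>g\<in>G. g x = y)"

text \<open>Permutation topology (pointwise convergence) on a set S of permutations of \<Omega>:
  the basic neighbourhoods of f are the translates f \<circ> (pointwise stabiliser of a finite F),
  i.e. the sets of g agreeing with f on F.\<close>
definition perm_topology :: "'a set \<Rightarrow> ('a \<Rightarrow> 'a) set \<Rightarrow> ('a \<Rightarrow> 'a) topology" where
  "perm_topology \<Omega> S = topology (\<lambda>U. U \<subseteq> S \<and>
     (\<forall>f\<in>U. \<exists>F. finite F \<and> F \<subseteq> \<Omega> \<and> {g\<in>S. \<forall>x\<in>F. g x = f x} \<subseteq> U))"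

definition Aut :: "('v \<Rightarrow> 'v \<Rightarrow> bool) \<Rightarrow> ('v \<Rightarrow> 'v) set" where
  "Aut E = {g. bij g \<and> (\<forall>u v. E u v \<longleftrightarrow> E (g u) (g v))}"

text \<open>The permutation c|A(gv) \<circ> g|A(v) \<circ> (c|A(v))^{-1} of Z (extended by the identity off Z).\<close>
definition local_action ::
  "('v \<Rightarrow> 'v \<Rightarrow> bool) \<Rightarrow> ('v \<times> 'v \<Rightarrow> 'c) \<Rightarrow> ('v \<Rightarrow> 'v) \<Rightarrow> 'v \<Rightarrow> 'c set \<Rightarrow> 'c \<Rightarrow> 'c" where
  "local_action E c g v Z = (\<lambda>x. if x \<in> Z then c (map_prod g g (the_inv_into (out_arcs E v) c x)) else x)"

definition U_c ::
  "('v \<Rightarrow> 'v \<Rightarrow> bool) \<Rightarrow> 'v set \<Rightarrow> 'v set \<Rightarrow> 'c set \<Rightarrow> 'c set \<Rightarrow> ('v \<times> 'v \<Rightarrow> 'c)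
     \<Rightarrow> ('c \<Rightarrow> 'c) set \<Rightarrow> ('c \<Rightarrow> 'c) set \<Rightarrow> ('v \<Rightarrow> 'v) set" where
  "U_c E VX VY X Y c M N = {g \<in> Aut E. g ` VX = VX
      \<and> (\<forall>v\<in>VX. local_action E c g v X \<in> M) \<and> (\<forall>v\<in>VY. local_action E c g v Y \<in> N)}"

text \<open>The permutation group induced on B(v) by H_v is permutation isomorphic to K \<le> Sym(Z):
  there is a bijection \<phi> : B(v) \<rightarrow> Z transporting the induced group onto K.\<close>
definition induced_perm_iso ::
  "('v \<Rightarrow> 'v \<Rightarrow> bool) \<Rightarrow> ('v \<Rightarrow> 'v) set \<Rightarrow> 'v \<Rightarrow> 'c set \<Rightarrow> ('c \<Rightarrow> 'c) set \<Rightarrow> bool" where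
  "induced_perm_iso E H v Z K \<longleftrightarrow> (\<exists>\<phi>. bij_betw \<phi> (nbrs E v) Z \<and>
      (\<lambda>h. (\<lambda>x. if x \<in> Z then \<phi> (h (the_inv_into (nbrs E v) \<phi> x)) else x)) ` {h \<in> H. h v = v} = K)"

definition locally_MN ::
  "('v \<Rightarrow> 'v \<Rightarrow> bool) \<Rightarrow> 'v set \<Rightarrow> 'v set \<Rightarrow> 'c set \<Rightarrow> 'c set
     \<Rightarrow> ('c \<Rightarrow> 'c) set \<Rightarrow> ('c \<Rightarrow> 'c) set \<Rightarrow> ('v \<Rightarrow> 'v) set \<Rightarrow> bool" where
  "locally_MN E VX VY X Y M N H \<longleftrightarrow> H \<subseteq> Aut E \<and> perm_group UNIV H
      \<and> (\<forall>g\<in>H. g ` VX = VX \<and> g ` VY = VY)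
      \<and> (\<forall>v\<in>VX. induced_perm_iso E H v X M) \<and> (\<forall>v\<in>VY. induced_perm_iso E H v Y N)"

end

theory Submission
  imports Defs
begin


locale tr = fixes E :: "'v \<Rightarrow> 'v \<Rightarrow> bool" assumes tree: "is_tree E"
begin

lemma irrefl: "\<not> E u u" using tree unfolding is_tree_def by blast
lemma sym: "E u v \<Longrightarrow> E v u" using tree unfolding is_tree_def by blast
lemma ex1_path: "\<exists>!p. is_path E p \<and> hd p = u \<and> last p = v"
  using tree unfolding is_tree_def by blast

definition tp where "tp u v = (THE p. is_path E p \<and> hd p = u \<and> last p = v)"

lemma tp: "is_path E (tp u v)" "hd (tp u v) = u" "last (tp u v) = v"
  using theI'[OF ex1_path[of u v]] unfolding tp_def by auto

lemma tp_eq: "is_path E p \<Longrightarrow> hd p = u \<Longrightarrow> last p = v \<Longrightarrow> tp u v = p"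
  using ex1_path[of u v] tp[of u v] by blast

lemma path_single: "is_path E [v]" unfolding is_path_def by auto

lemma path_pair: "E u v \<Longrightarrow> is_path E [u,v]"
  unfolding is_path_def using irrefl[of u]
  by (auto simp: less_Suc_eq nth_Cons split: nat.splits)

lemma path_ne: "is_path E p \<Longrightarrow> p \<noteq> []" unfolding is_path_def by auto

lemma path_append1:
  assumes "is_path E p" "E (last p) w" "w \<notin> set p"
  shows "is_path E (p @ [w])"
  unfolding is_path_def
proof (intro conjI allI impI)
  show "p @ [w] \<noteq> []" by simp
  show "distinct (p @ [w])" using assms unfolding is_path_def by auto
  fix i assume i: "Suc i < length (p @ [w])"
  show "E ((p @ [w]) ! i) ((p @ [w]) ! Suc i)"
  proof (cases "Suc i < length p")
    case True thus ?thesis using assms(1) unfolding is_path_def by (auto simp: nth_append)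
  next
    case False
    hence "i = length p - 1" "Suc i = length p" using i by simp_all
    moreover have "p \<noteq> []" using assms(1) path_ne by auto
    ultimately show ?thesis using assms(2) by (auto simp: nth_append last_conv_nth)
  qed
qed

lemma path_butlast:
  assumes "is_path E p" "2 \<le> length p"
  shows "is_path E (butlast p)" "E (last (butlast p)) (last p)"
proof -
  have "0 < length (butlast p)" using assms(2) by simp
  hence bne: "butlast p \<noteq> []" using length_greater_0_conv by blast
  thus "is_path E (butlast p)" using assms unfolding is_path_def
    by (auto simp: nth_butlast distinct_butlast)
  have "Suc (length p - 2) < length p" using assms by simp
  hence "E (p ! (length p - 2)) (p ! Suc (length p - 2))" using assms unfolding is_path_def by blast
  moreover have "Suc (length p - 2) = length p - 1" using assms by simp
  moreover have "last (butlast p) = p ! (length p - 2)"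
    using \<open>butlast p \<noteq> []\<close> assms(2) by (simp add: last_conv_nth nth_butlast numeral_2_eq_2)
  moreover have "last p = p ! (length p - 1)" using path_ne[OF assms(1)] by (simp add: last_conv_nth)
  ultimately show "E (last (butlast p)) (last p)" by simp
qed

lemma path_drop:
  assumes "is_path E p" "k < length p"
  shows "is_path E (drop k p)"
  using assms unfolding is_path_def by auto

definition dist where "dist r v = length (tp r v) - 1"
definition par where "par r v = last (butlast (tp r v))"

lemma tp_len2: assumes "v \<noteq> r" shows "2 \<le> length (tp r v)"
proof (rule ccontr)
  assume "\<not> ?thesis"
  moreover have "tp r v \<noteq> []" using tp path_ne by blast
  ultimately obtain a where "tp r v = [a]"
    by (cases "tp r v"; cases "tl (tp r v)") auto
  thus False using tp(2,3)[of r v] assms by simp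
qed

lemma par:
  assumes "v \<noteq> r"
  shows "E (par r v) v" "tp r (par r v) = butlast (tp r v)" "dist r v = Suc (dist r (par r v))"
proof -
  have L: "2 \<le> length (tp r v)" using tp_len2 assms .
  show "E (par r v) v" using path_butlast[OF tp(1) L] tp(3) unfolding par_def by simp
  have "hd (butlast (tp r v)) = r" using L tp(2)[of r v]
    by (cases "tp r v") auto
  thus T: "tp r (par r v) = butlast (tp r v)"
    unfolding par_def by (intro tp_eq path_butlast[OF tp(1) L]) auto
  show "dist r v = Suc (dist r (par r v))" unfolding dist_def T using L by simp
qed

lemma dist_root: "dist r r = 0"
proof -
  have "tp r r = [r]" by (rule tp_eq[OF path_single]) auto
  thus ?thesis unfolding dist_def by simp
qed

lemma tree_induct:
  assumes "P r" "\<And>v. v \<noteq> r \<Longrightarrow> P (par r v) \<Longrightarrow> P v"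
  shows "P v"
proof (induction "dist r v" arbitrary: v rule: less_induct)
  case less
  show ?case
  proof (cases "v = r")
    case True thus ?thesis using assms by simp
  next
    case False
    have "dist r (par r v) < dist r v" using par(3)[OF False] by simp
    hence "P (par r v)" using less by blast
    thus ?thesis using assms(2) False by blast
  qed
qed

lemma nbr_cases:
  assumes "E u v"
  shows "(v \<noteq> r \<and> par r v = u) \<or> (u \<noteq> r \<and> par r u = v)"
proof -
  let ?p = "tp r u"
  show ?thesis
  proof (cases "v \<in> set ?p")
    case False
    have "last ?p = u" by (rule tp)
    hence P: "is_path E (?p @ [v])" using path_append1[OF tp(1)] assms False by simp
    have "hd (?p @ [v]) = r" using tp(2) path_ne[OF tp(1)] by simp
    hence "tp r v = ?p @ [v]" by (intro tp_eq[OF P]) auto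
    moreover have "v \<noteq> r" using False tp(2)[of r u] path_ne[OF tp(1)[of r u]]
      by (metis hd_in_set)
    ultimately show ?thesis unfolding par_def using tp(3) by simp
  next
    case True
    then obtain k where k: "k < length ?p" "?p ! k = v" by (auto simp: in_set_conv_nth)
    have P: "is_path E (drop k ?p)" using path_drop[OF tp(1) k(1)] .
    have "hd (drop k ?p) = v" using k by (simp add: hd_drop_conv_nth)
    moreover have "last (drop k ?p) = u" using k tp(3)[of r u] by simp
    ultimately have "tp v u = drop k ?p" by (intro tp_eq[OF P])
    moreover have "tp v u = [v, u]" by (intro tp_eq[OF path_pair[OF sym[OF assms]]]) auto
    ultimately have D: "drop k ?p = [v, u]" by simp
    hence "length (drop k ?p) = 2" by simp
    hence len: "length ?p = k + 2" by simp
    have "u \<noteq> r"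
    proof
      assume "u = r"
      hence "tp r u = [r]" by (intro tp_eq[OF path_single]) auto
      thus False using len by simp
    qed
    moreover have "par r u = v"
    proof -
      have "butlast ?p \<noteq> []" using len by (metis One_nat_def Suc_1 Zero_not_Suc add_Suc_right diff_Suc_1 length_0_conv length_butlast)
      hence "last (butlast ?p) = butlast ?p ! k" using len by (simp add: last_conv_nth)
      also have "\<dots> = v" using len k by (simp add: nth_butlast)
      finally show ?thesis unfolding par_def .
    qed
    ultimately show ?thesis by simp
  qed
qed

primrec trec0 :: "'v \<Rightarrow> 'a \<Rightarrow> ('v \<Rightarrow> 'a \<Rightarrow> 'a) \<Rightarrow> nat \<Rightarrow> 'v \<Rightarrow> 'a" where
  "trec0 r b s 0 v = b"
| "trec0 r b s (Suc n) v = (if v = r then b else s v (trec0 r b s n (par r v)))"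

definition treerec where "treerec r b s v = trec0 r b s (dist r v) v"

lemma treerec_root: "treerec r b s r = b"
  unfolding treerec_def dist_root by simp

lemma treerec_step: "v \<noteq> r \<Longrightarrow> treerec r b s v = s v (treerec r b s (par r v))"
  unfolding treerec_def using par(3) by simp

end



locale bt =
  fixes E :: "'v \<Rightarrow> 'v \<Rightarrow> bool" and VX VY :: "'v set" and X Y :: "'c set"
  assumes bir: "biregular_tree E VX VY X Y" and disj: "X \<inter> Y = {}"
    and Xne: "X \<noteq> {}" and Yne: "Y \<noteq> {}"
begin

sublocale tr E using bir unfolding biregular_tree_def by unfold_locales blast

lemma VY_eq: "VY = - VX" using bir unfolding biregular_tree_def by blast
lemma inVY: "v \<in> VY \<longleftrightarrow> v \<notin> VX" using VY_eq by blast
lemma side: "E u v \<Longrightarrow> u \<in> VX \<longleftrightarrow> v \<notin> VX"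
  using bir VY_eq unfolding biregular_tree_def by blast

definition Z where "Z v = (if v \<in> VX then X else Y)"

lemma Z_ne: "Z v \<noteq> {}" using Xne Yne unfolding Z_def by auto

lemma nbrs_eqp: "nbrs E v \<approx> Z v"
  using bir VY_eq unfolding biregular_tree_def Z_def by auto

lemma ex_nbr: "\<exists>u. E v u"
proof -
  obtain f where "bij_betw f (nbrs E v) (Z v)" using nbrs_eqp unfolding eqpoll_def by blast
  moreover obtain z where "z \<in> Z v" using Z_ne by blast
  ultimately have "nbrs E v \<noteq> {}" by (auto simp: bij_betw_def)
  thus ?thesis unfolding nbrs_def by auto
qed

lemma Z_nbr: "E u v \<Longrightarrow> Z u \<noteq> Z v \<and> Z u \<inter> Z v = {}"
  using side[of u v] disj Xne unfolding Z_def by auto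

definition legal_lab where "legal_lab l \<longleftrightarrow> (\<forall>v. bij_betw l (nbrs E v) (Z v))"

definition nb where "nb l v x = (THE u. E v u \<and> l u = x)"

lemma lab_Z: "legal_lab l \<Longrightarrow> E v u \<Longrightarrow> l u \<in> Z v"
  unfolding legal_lab_def bij_betw_def nbrs_def by blast

lemma lab_inj: "legal_lab l \<Longrightarrow> E v u \<Longrightarrow> E v w \<Longrightarrow> l u = l w \<Longrightarrow> u = w"
  unfolding legal_lab_def bij_betw_def nbrs_def inj_on_def by blast

lemma nb: assumes "legal_lab l" "x \<in> Z v" shows "E v (nb l v x)" "l (nb l v x) = x"
proof -
  have "\<exists>u. E v u \<and> l u = x"
    using assms unfolding legal_lab_def bij_betw_def nbrs_def by (metis (mono_tags, lifting) imageE mem_Collect_eq)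
  hence "\<exists>!u. E v u \<and> l u = x" using lab_inj[OF assms(1)] by blast
  from theI'[OF this] show "E v (nb l v x)" "l (nb l v x) = x" unfolding nb_def by auto
qed

lemma nb_eq: assumes "legal_lab l" "E v u" shows "nb l v (l u) = u"
  using nb[OF assms(1) lab_Z[OF assms]] lab_inj[OF assms(1)] assms(2) by blast

definition labc where "labc c v = c (SOME u. E u v, v)"

lemma labc_arc:
  assumes c: "legal_colouring E VX VY X Y c" and "E u v"
  shows "c (u, v) = labc c v"
proof -
  have "\<exists>u. E u v" using assms(2) by blast
  hence "E (SOME u. E u v) v" by (rule someI_ex)
  hence "(SOME u. E u v, v) \<in> in_arcs E v" "(u, v) \<in> in_arcs E v"
    using assms(2) unfolding in_arcs_def arcs_def by auto
  moreover have "\<forall>a\<in>in_arcs E v. \<forall>b\<in>in_arcs E v. c a = c b"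
    using c unfolding legal_colouring_def by blast
  ultimately show ?thesis unfolding labc_def by metis
qed

lemma out_arcs_eq: "out_arcs E v = Pair v ` nbrs E v"
  unfolding out_arcs_def arcs_def nbrs_def by auto

lemma col_bij: "legal_colouring E VX VY X Y c \<Longrightarrow> bij_betw c (out_arcs E v) (Z v)"
  unfolding legal_colouring_def Z_def using inVY by auto

lemma legal_labc:
  assumes c: "legal_colouring E VX VY X Y c" shows "legal_lab (labc c)"
  unfolding legal_lab_def
proof
  fix v
  have b1: "bij_betw (Pair v) (nbrs E v) (out_arcs E v)"
    unfolding out_arcs_eq by (simp add: bij_betw_imageI inj_on_def)
  have "bij_betw (c \<circ> Pair v) (nbrs E v) (Z v)"
    using bij_betw_trans[OF b1 col_bij[OF c]] .
  moreover have "\<forall>u\<in>nbrs E v. (c \<circ> Pair v) u = labc c u"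
    using labc_arc[OF c] unfolding nbrs_def by auto
  ultimately show "bij_betw (labc c) (nbrs E v) (Z v)"
    using bij_betw_cong[of "nbrs E v" "c \<circ> Pair v" "labc c" "Z v"] by simp
qed

lemma legal_col_of:
  assumes l: "legal_lab l" shows "legal_colouring E VX VY X Y (\<lambda>a. l (snd a))"
proof -
  have bb: "bij_betw (\<lambda>a. l (snd a)) (out_arcs E v) (Z v)" for v
  proof -
    have b1: "bij_betw snd (out_arcs E v) (nbrs E v)"
      unfolding out_arcs_eq by (auto simp: bij_betw_def inj_on_def image_image)
    have "bij_betw (l \<circ> snd) (out_arcs E v) (Z v)"
      using bij_betw_trans[OF b1] l unfolding legal_lab_def by blast
    thus ?thesis by (simp add: comp_def)
  qed
  have "\<forall>v. \<forall>a\<in>in_arcs E v. \<forall>b\<in>in_arcs E v. l (snd a) = l (snd b)"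
    unfolding in_arcs_def by auto
  moreover have "\<forall>v\<in>VX. bij_betw (\<lambda>a. l (snd a)) (out_arcs E v) X"
    using bb unfolding Z_def by presburger
  moreover have "\<forall>v\<in>VY. bij_betw (\<lambda>a. l (snd a)) (out_arcs E v) Y"
    using bb inVY unfolding Z_def by presburger
  ultimately show ?thesis unfolding legal_colouring_def by blast
qed

lemma AutD: "g \<in> Aut E \<Longrightarrow> bij g" "g \<in> Aut E \<Longrightarrow> E u v \<longleftrightarrow> E (g u) (g v)"
  unfolding Aut_def by auto

lemma Aut_id: "id \<in> Aut E" unfolding Aut_def by auto

lemma Aut_comp: "g \<in> Aut E \<Longrightarrow> h \<in> Aut E \<Longrightarrow> g \<circ> h \<in> Aut E"
  unfolding Aut_def by (auto intro: bij_comp)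

lemma Aut_inv: assumes "g \<in> Aut E" shows "inv g \<in> Aut E"
proof -
  have b: "bij g" using AutD(1)[OF assms] .
  have "E u v \<longleftrightarrow> E (inv g u) (inv g v)" for u v
    using AutD(2)[OF assms, of "inv g u" "inv g v"] b by (simp add: bij_is_surj surj_f_inv_f)
  thus ?thesis using b unfolding Aut_def by (auto simp: bij_imp_bij_inv)
qed

lemma la:
  assumes c: "legal_colouring E VX VY X Y c" and g: "g \<in> Aut E" and x: "x \<in> Z v"
  shows "local_action E c g v (Z v) x = labc c (g (nb (labc c) v x))"
proof -
  let ?l = "labc c" let ?u = "nb ?l v x"
  have l: "legal_lab ?l" using legal_labc[OF c] .
  have e: "E v ?u" and lu: "?l ?u = x" using nb[OF l x] by auto
  have "c (v, ?u) = x" using labc_arc[OF c e] lu by simp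
  moreover have "(v, ?u) \<in> out_arcs E v" using e unfolding out_arcs_def arcs_def by simp
  moreover have "inj_on c (out_arcs E v)" using col_bij[OF c] bij_betw_def by blast
  ultimately have "the_inv_into (out_arcs E v) c x = (v, ?u)" by (intro the_inv_into_f_eq) auto
  moreover have "E (g v) (g ?u)" using AutD(2)[OF g] e by blast
  ultimately show ?thesis unfolding local_action_def using x labc_arc[OF c] by simp
qed

lemma la_out: "x \<notin> Z v \<Longrightarrow> local_action E c g v (Z v) x = x"
  unfolding local_action_def by simp

end



context bt begin

lemma Z_same: "(u \<in> VX \<longleftrightarrow> w \<in> VX) \<Longrightarrow> Z u = Z w" unfolding Z_def by simp

lemma twist_half:
  assumes l1: "legal_lab l1" and l2: "legal_lab l2"
    and tX: "\<And>x. x \<in> X \<Longrightarrow> \<tau> x \<in> X" and tY: "\<And>x. x \<in> Y \<Longrightarrow> \<tau> x \<in> Y"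
    and rr: "r \<in> VX \<longleftrightarrow> r' \<in> VX" and lr: "l2 r' = \<tau> (l1 r)"
  shows "\<exists>g. g r = r' \<and> (\<forall>v. v \<in> VX \<longleftrightarrow> g v \<in> VX) \<and> (\<forall>v. l2 (g v) = \<tau> (l1 v))
          \<and> (\<forall>u v. E u v \<longrightarrow> E (g u) (g v))"
proof -
  define g where "g = treerec r r' (\<lambda>v w. nb l2 w (\<tau> (l1 v)))"
  have g_root: "g r = r'" unfolding g_def by (rule treerec_root)
  have g_step: "g v = nb l2 (g (par r v)) (\<tau> (l1 v))" if "v \<noteq> r" for v
    unfolding g_def using treerec_step[OF that] .
  have tZ: "\<tau> x \<in> Z w" if "x \<in> Z w" for x w using that tX tY unfolding Z_def by (auto split: if_splits)
  have Q: "(v \<in> VX \<longleftrightarrow> g v \<in> VX) \<and> l2 (g v) = \<tau> (l1 v) \<and> (v \<noteq> r \<longrightarrow> E (g (par r v)) (g v))" for v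
  proof (induction v rule: tree_induct[of _ r])
    case 1 thus ?case using g_root rr lr by simp
  next
    case (2 v)
    let ?p = "par r v"
    have e: "E ?p v" using par(1)[OF 2(1)] .
    have "l1 v \<in> Z ?p" using lab_Z[OF l1 e] .
    hence "\<tau> (l1 v) \<in> Z (g ?p)" using tZ Z_same[of ?p "g ?p"] 2(2) by metis
    hence e2: "E (g ?p) (g v)" and lv: "l2 (g v) = \<tau> (l1 v)"
      using nb[OF l2] g_step[OF 2(1)] by auto
    have "v \<in> VX \<longleftrightarrow> g v \<in> VX" using side[OF e] side[OF e2] 2(2) by blast
    thus ?case using e2 lv by blast
  qed
  have adj: "E (g u) (g v)" if "E u v" for u v
    using nbr_cases[OF that, of r] Q sym by metis
  show ?thesis using g_root Q adj by blast
qed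

lemma twist:
  assumes l1: "legal_lab l1" and l2: "legal_lab l2"
    and bt: "bij \<tau>" and tX: "\<tau> ` X = X" and tY: "\<tau> ` Y = Y"
    and rr: "r \<in> VX \<longleftrightarrow> r' \<in> VX" and lr: "l2 r' = \<tau> (l1 r)"
  shows "\<exists>g\<in>Aut E. g r = r' \<and> g ` VX = VX \<and> (\<forall>v. l2 (g v) = \<tau> (l1 v))"
proof -
  have tX': "\<And>x. x \<in> X \<Longrightarrow> \<tau> x \<in> X" using tX by blast
  have tY': "\<And>x. x \<in> Y \<Longrightarrow> \<tau> x \<in> Y" using tY by blast
  obtain g where g: "g r = r'" "\<forall>v. v \<in> VX \<longleftrightarrow> g v \<in> VX" "\<forall>v. l2 (g v) = \<tau> (l1 v)"
     "\<forall>u v. E u v \<longrightarrow> E (g u) (g v)"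
    using twist_half[where \<tau>=\<tau> and r=r and r'=r', OF l1 l2 tX' tY' rr lr] by blast
  have iX: "inv \<tau> x \<in> X" if "x \<in> X" for x
    using that tX bt by (metis bij_inv_eq_iff imageE)
  have iY: "inv \<tau> x \<in> Y" if "x \<in> Y" for x
    using that tY bt by (metis bij_inv_eq_iff imageE)
  have lr': "l1 r = inv \<tau> (l2 r')" using lr bt by (simp add: bij_inv_eq_iff)
  obtain h where h: "h r' = r" "\<forall>v. v \<in> VX \<longleftrightarrow> h v \<in> VX" "\<forall>v. l1 (h v) = inv \<tau> (l2 v)"
     "\<forall>u v. E u v \<longrightarrow> E (h u) (h v)"
    using twist_half[where \<tau>="inv \<tau>" and r=r' and r'=r, OF l2 l1 iX iY rr[symmetric] lr'] by blast
  have hg: "h (g v) = v" for v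
  proof (induction v rule: tree_induct[of _ r])
    case 1 thus ?case using g h by simp
  next
    case (2 v)
    let ?p = "par r v"
    have e: "E ?p v" using par(1)[OF 2(1)] .
    have "E (h (g ?p)) (h (g v))" using g(4) h(4) e by blast
    hence e2: "E ?p (h (g v))" using 2(2) by simp
    have "l1 (h (g v)) = inv \<tau> (l2 (g v))" using h(3) by blast
    also have "\<dots> = l1 v" using g(3) bt by (simp add: bij_is_inj)
    finally have "l1 (h (g v)) = l1 v" .
    thus ?case using lab_inj[OF l1 e2 e] by simp
  qed
  have gh: "g (h v) = v" for v
  proof (induction v rule: tree_induct[of _ r'])
    case 1 thus ?case using g h by simp
  next
    case (2 v)
    let ?p = "par r' v"
    have e: "E ?p v" using par(1)[OF 2(1)] .
    have "E (g (h ?p)) (g (h v))" using g(4) h(4) e by blast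
    hence e2: "E ?p (g (h v))" using 2(2) by simp
    have "l2 (g (h v)) = \<tau> (l1 (h v))" using g(3) by blast
    also have "\<dots> = l2 v" using h(3) bt by (simp add: bij_is_surj surj_f_inv_f)
    finally have "l2 (g (h v)) = l2 v" .
    thus ?case using lab_inj[OF l2 e2 e] by simp
  qed
  have bg: "bij g" using hg gh by (metis bij_betw_byWitness subset_UNIV)
  have "E u v \<longleftrightarrow> E (g u) (g v)" for u v
    using g(4) h(4) hg by metis
  hence "g \<in> Aut E" using bg unfolding Aut_def by blast
  moreover have "g ` VX = VX"
  proof
    show "g ` VX \<subseteq> VX" using g(2) by blast
    show "VX \<subseteq> g ` VX" using g(2) h(2) gh by (metis image_eqI subsetI)
  qed
  ultimately show ?thesis using g by blast
qed

end



context bt begin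

definition Fs :: "('c \<Rightarrow> 'c) set \<Rightarrow> ('c \<Rightarrow> 'c) set \<Rightarrow> 'v \<Rightarrow> ('c \<Rightarrow> 'c) set"
  where "Fs M N v = (if v \<in> VX then M else N)"

lemma U_c_iff:
  "g \<in> U_c E VX VY X Y c M N \<longleftrightarrow>
     g \<in> Aut E \<and> g ` VX = VX \<and> (\<forall>v. local_action E c g v (Z v) \<in> Fs M N v)"
proof -
  have "(\<forall>v. local_action E c g v (Z v) \<in> Fs M N v) \<longleftrightarrow>
        (\<forall>v\<in>VX. local_action E c g v X \<in> M) \<and> (\<forall>v\<in>VY. local_action E c g v Y \<in> N)"
  proof -
    have r: "local_action E c g v (Z v) \<in> Fs M N v \<longleftrightarrow> (if v \<in> VX then local_action E c g v X \<in> M else local_action E c g v Y \<in> N)" for v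
      unfolding Z_def Fs_def by simp
    show ?thesis unfolding r using inVY by auto
  qed
  thus ?thesis unfolding U_c_def by blast
qed

lemma pres: assumes "g \<in> Aut E" "g ` VX = VX" shows "g v \<in> VX \<longleftrightarrow> v \<in> VX"
proof -
  have "inj g" using AutD(1)[OF assms(1)] bij_is_inj by blast
  thus ?thesis using assms(2) by (metis image_eqI inj_image_mem_iff)
qed

lemma pres_Z: "g \<in> Aut E \<Longrightarrow> g ` VX = VX \<Longrightarrow> Z (g v) = Z v"
  using pres unfolding Z_def by simp

lemma pres_Fs: "g \<in> Aut E \<Longrightarrow> g ` VX = VX \<Longrightarrow> Fs M N (g v) = Fs M N v"
  using pres unfolding Fs_def by simp

lemma Aut_inv_VX: assumes "g \<in> Aut E" "g ` VX = VX" shows "inv g ` VX = VX"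
proof -
  have "inj g" using AutD(1)[OF assms(1)] bij_is_inj by blast
  hence "inv g ` (g ` VX) = VX" by (rule image_inv_f_f)
  thus ?thesis using assms(2) by simp
qed

lemma la_comp:
  assumes c: "legal_colouring E VX VY X Y c" and g: "g \<in> Aut E" and h: "h \<in> Aut E"
    and hV: "h ` VX = VX"
  shows "local_action E c (g \<circ> h) v (Z v) = local_action E c g (h v) (Z (h v)) \<circ> local_action E c h v (Z v)"
proof
  fix x
  let ?l = "labc c"
  have l: "legal_lab ?l" using legal_labc[OF c] .
  have ZZ: "Z (h v) = Z v" using pres_Z[OF h hV] .
  show "local_action E c (g \<circ> h) v (Z v) x = (local_action E c g (h v) (Z (h v)) \<circ> local_action E c h v (Z v)) x"
  proof (cases "x \<in> Z v")
    case True
    let ?u = "nb ?l v x"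
    have e: "E v ?u" using nb[OF l True] by blast
    have e2: "E (h v) (h ?u)" using AutD(2)[OF h] e by blast
    have 1: "local_action E c h v (Z v) x = ?l (h ?u)" using la[OF c h True] .
    have 2: "?l (h ?u) \<in> Z (h v)" using lab_Z[OF l e2] .
    have 3: "local_action E c g (h v) (Z (h v)) (?l (h ?u)) = ?l (g (h ?u))"
      using la[OF c g 2] nb_eq[OF l e2] by simp
    have 4: "local_action E c (g \<circ> h) v (Z v) x = ?l (g (h ?u))"
      using la[OF c Aut_comp[OF g h] True] by simp
    show ?thesis using 1 3 4 by simp
  next
    case False
    thus ?thesis using ZZ la_out[of x v] la_out[of x "h v"] by simp
  qed
qed

lemma la_id:
  assumes c: "legal_colouring E VX VY X Y c"
  shows "local_action E c id v (Z v) = id"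
proof
  fix x
  have l: "legal_lab (labc c)" using legal_labc[OF c] .
  show "local_action E c id v (Z v) x = id x"
  proof (cases "x \<in> Z v")
    case True
    thus ?thesis using la[OF c Aut_id True] nb[OF l True] by simp
  qed (simp add: la_out)
qed

lemma comp_inv_id: "bij g \<Longrightarrow> g \<circ> inv g = id" "bij g \<Longrightarrow> inv g \<circ> g = id"
  by (auto simp: fun_eq_iff bij_is_inj bij_is_surj surj_f_inv_f)

lemma la_inv:
  assumes c: "legal_colouring E VX VY X Y c" and g: "g \<in> Aut E" and gV: "g ` VX = VX"
  shows "local_action E c g (inv g v) (Z (inv g v)) \<circ> local_action E c (inv g) v (Z v) = id"
    "local_action E c (inv g) v (Z v) \<circ> local_action E c g (inv g v) (Z (inv g v)) = id"
proof -
  have b: "bij g" using AutD(1)[OF g] .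
  have ig: "inv g \<in> Aut E" using Aut_inv[OF g] .
  have igV: "inv g ` VX = VX" using Aut_inv_VX[OF g gV] .
  have "local_action E c g (inv g v) (Z (inv g v)) \<circ> local_action E c (inv g) v (Z v)
        = local_action E c (g \<circ> inv g) v (Z v)"
    using la_comp[OF c g ig igV] by simp
  thus "local_action E c g (inv g v) (Z (inv g v)) \<circ> local_action E c (inv g) v (Z v) = id"
    using la_id[OF c] comp_inv_id(1)[OF b] by simp
  have "local_action E c (inv g) (g (inv g v)) (Z (g (inv g v))) \<circ> local_action E c g (inv g v) (Z (inv g v))
        = local_action E c (inv g \<circ> g) (inv g v) (Z (inv g v))"
    using la_comp[OF c ig g gV] by simp
  moreover have "g (inv g v) = v" using b by (simp add: bij_is_surj surj_f_inv_f)
  ultimately show "local_action E c (inv g) v (Z v) \<circ> local_action E c g (inv g v) (Z (inv g v)) = id"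
    using la_id[OF c] comp_inv_id(2)[OF b] by simp
qed

lemma la_permutes:
  assumes c: "legal_colouring E VX VY X Y c" and g: "g \<in> Aut E" and gV: "g ` VX = VX"
  shows "local_action E c g w (Z w) permutes (Z w)"
proof -
  have b: "bij g" using AutD(1)[OF g] .
  define v where "v = g w"
  have w: "w = inv g v" unfolding v_def using b by (simp add: bij_is_inj)
  let ?p = "local_action E c g w (Z w)" and ?q = "local_action E c (inv g) v (Z v)"
  have 1: "?p \<circ> ?q = id" and 2: "?q \<circ> ?p = id" using la_inv[OF c g gV, of v] w by auto
  show ?thesis unfolding permutes_def
  proof (intro conjI allI impI)
    fix x assume "x \<notin> Z w" thus "?p x = x" by (rule la_out)
  next
    fix y
    have a: "?p (?q y) = y" using 1 by (simp add: fun_eq_iff)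
    have b: "x = ?q y" if "?p x = y" for x
    proof -
      have "?q (?p x) = x" using 2 by (simp add: fun_eq_iff)
      thus ?thesis using that by simp
    qed
    show "\<exists>!x. ?p x = y" using a b by blast
  qed
qed

end



context bt begin

lemma lab_side: assumes l: "legal_lab l"
  shows "l v \<in> X \<longleftrightarrow> v \<notin> VX" "l v \<in> Y \<longleftrightarrow> v \<in> VX"
proof -
  obtain u where e: "E u v" using ex_nbr[of v] sym by blast
  have lz: "l v \<in> Z u" using lab_Z[OF l e] .
  have "u \<in> VX \<longleftrightarrow> v \<notin> VX" using side[OF e] .
  thus "l v \<in> X \<longleftrightarrow> v \<notin> VX" "l v \<in> Y \<longleftrightarrow> v \<in> VX" using lz disj unfolding Z_def
    by (auto split: if_splits)
qed

lemma ex_VX: "\<exists>v. v \<in> VX"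
proof -
  obtain v0 :: 'v where True by blast
  obtain u where "E v0 u" using ex_nbr by blast
  thus ?thesis using side by blast
qed

lemma lab_surj: assumes l: "legal_lab l" and x: "x \<in> X \<union> Y" shows "\<exists>v. l v = x"
proof -
  obtain v0 where v0: "v0 \<in> VX" using ex_VX by blast
  obtain u where "E v0 u" using ex_nbr by blast
  hence u: "u \<notin> VX" using side v0 by blast
  show ?thesis
  proof (cases "x \<in> X")
    case True
    hence "x \<in> Z v0" using v0 unfolding Z_def by simp
    thus ?thesis using nb[OF l] by blast
  next
    case False
    hence "x \<in> Z u" using u x unfolding Z_def by simp
    thus ?thesis using nb[OF l] by blast
  qed
qed

lemma pg_Fs: assumes "perm_group X M" "perm_group Y N" shows "perm_group (Z v) (Fs M N v)"
  using assms unfolding Z_def Fs_def by simp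

lemma pgD: assumes "perm_group S G"
  shows "id \<in> G" "p \<in> G \<Longrightarrow> q \<in> G \<Longrightarrow> p \<circ> q \<in> G" "p \<in> G \<Longrightarrow> inv p \<in> G"
    "p \<in> G \<Longrightarrow> p permutes S"
  using assms unfolding perm_group_def Sym_def by auto

lemma U_sub: "U_c E VX VY X Y c M N \<subseteq> Aut E" unfolding U_c_def by blast

lemma U_VX: "g \<in> U_c E VX VY X Y c M N \<Longrightarrow> g ` VX = VX" unfolding U_c_def by blast

lemma U_VY: assumes "g \<in> U_c E VX VY X Y c M N" shows "g ` VY = VY"
proof -
  have "bij g" "g ` VX = VX" using assms AutD(1) unfolding U_c_def by auto
  thus ?thesis unfolding VY_eq by (simp add: bij_image_Compl_eq)
qed

lemma U_group:
  assumes c: "legal_colouring E VX VY X Y c" and M: "perm_group X M" and N: "perm_group Y N"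
  shows "perm_group UNIV (U_c E VX VY X Y c M N)"
proof -
  let ?U = "U_c E VX VY X Y c M N"
  have pg: "perm_group (Z v) (Fs M N v)" for v using pg_Fs[OF M N] .
  have "id \<in> ?U" unfolding U_c_iff using Aut_id la_id[OF c] pgD(1)[OF pg] by simp
  moreover have "g \<circ> h \<in> ?U" if g: "g \<in> ?U" and h: "h \<in> ?U" for g h
  proof -
    have ga: "g \<in> Aut E" "g ` VX = VX" "\<forall>v. local_action E c g v (Z v) \<in> Fs M N v"
      using g unfolding U_c_iff by auto
    have ha: "h \<in> Aut E" "h ` VX = VX" "\<forall>v. local_action E c h v (Z v) \<in> Fs M N v"
      using h unfolding U_c_iff by auto
    have "local_action E c (g \<circ> h) v (Z v) \<in> Fs M N v" for v
    proof -
      have "local_action E c g (h v) (Z (h v)) \<in> Fs M N v"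
        using ga(3) pres_Fs[OF ha(1,2)] by metis
      thus ?thesis using la_comp[OF c ga(1) ha(1,2)] pgD(2)[OF pg] ha(3) by simp
    qed
    moreover have "(g \<circ> h) ` VX = VX" using ga ha image_comp[of g h VX] by simp
    ultimately show ?thesis unfolding U_c_iff using Aut_comp[OF ga(1) ha(1)] by blast
  qed
  moreover have "inv g \<in> ?U" if g: "g \<in> ?U" for g
  proof -
    have ga: "g \<in> Aut E" "g ` VX = VX" "\<forall>v. local_action E c g v (Z v) \<in> Fs M N v"
      using g unfolding U_c_iff by auto
    have ig: "inv g \<in> Aut E" "inv g ` VX = VX" using Aut_inv[OF ga(1)] Aut_inv_VX[OF ga(1,2)] by auto
    have "local_action E c (inv g) v (Z v) \<in> Fs M N v" for v
    proof -
      let ?p = "local_action E c g (inv g v) (Z (inv g v))"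
      have "inv ?p = local_action E c (inv g) v (Z v)"
        using la_inv[OF c ga(1,2), of v] by (intro inv_unique_comp) auto
      moreover have "?p \<in> Fs M N v" using ga(3) pres_Fs[OF ig] by metis
      ultimately show ?thesis using pgD(3)[OF pg] by metis
    qed
    thus ?thesis unfolding U_c_iff using ig by blast
  qed
  moreover have "?U \<subseteq> Sym UNIV"
  proof
    fix g assume "g \<in> ?U"
    hence "bij g" using U_sub[of c M N] AutD(1) by blast
    hence "g permutes UNIV" using bij_imp_permutes[of g UNIV] by simp
    thus "g \<in> Sym UNIV" unfolding Sym_def by simp
  qed
  ultimately show ?thesis unfolding perm_group_def by blast
qed

lemma twistU:
  assumes c: "legal_colouring E VX VY X Y c" and M: "perm_group X M" and N: "perm_group Y N"
    and m: "m \<in> M" and n: "n \<in> N" and rr: "r \<in> VX \<longleftrightarrow> r' \<in> VX"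
    and lr: "labc c r' = m (n (labc c r))"
  shows "\<exists>g\<in>U_c E VX VY X Y c M N. g r = r' \<and> (\<forall>w. labc c (g w) = m (n (labc c w)))
           \<and> (\<forall>w. local_action E c g w (Z w) = (if w \<in> VX then m else n))"
proof -
  let ?l = "labc c"
  have l: "legal_lab ?l" using legal_labc[OF c] .
  have mp: "m permutes X" using pgD(4)[OF M m] .
  have np: "n permutes Y" using pgD(4)[OF N n] .
  have mY: "m y = y" if "y \<in> Y" for y using mp that disj by (meson disjoint_iff permutes_not_in)
  have nX: "n x = x" if "x \<in> X" for x using np that disj by (meson disjoint_iff permutes_not_in)
  have bt: "bij (m \<circ> n)" using bij_comp[OF permutes_bij[OF np] permutes_bij[OF mp]] .
  have tX: "(m \<circ> n) ` X = X"
  proof -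
    have "n ` X = X" using nX by auto
    thus ?thesis using permutes_image[OF mp] image_comp[of m n X] by simp
  qed
  have tY: "(m \<circ> n) ` Y = Y"
  proof -
    have "m ` Y = Y" using mY by auto
    thus ?thesis using permutes_image[OF np] image_comp[of m n Y] by simp
  qed
  obtain g where g: "g \<in> Aut E" "g r = r'" "g ` VX = VX" "\<forall>v. ?l (g v) = (m \<circ> n) (?l v)"
    using twist[OF l l bt tX tY rr] lr by auto
  have lag: "local_action E c g w (Z w) = (if w \<in> VX then m else n)" for w
  proof
    fix x
    show "local_action E c g w (Z w) x = (if w \<in> VX then m else n) x"
    proof (cases "x \<in> Z w")
      case True
      have 1: "local_action E c g w (Z w) x = m (n x)"
        using la[OF c g(1) True] g(4) nb[OF l True] by simp
      have nY: "n x \<in> Y" if "x \<in> Y" using that np by (simp add: permutes_in_image)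
      show ?thesis using 1 True mY nX nY unfolding Z_def by (auto split: if_splits)
    next
      case False
      thus ?thesis using la_out[OF False] mp np unfolding Z_def
        by (auto split: if_splits intro: permutes_not_in[symmetric])
    qed
  qed
  have "g \<in> U_c E VX VY X Y c M N" unfolding U_c_iff Fs_def using g lag m n by simp
  thus ?thesis using g lag by auto
qed

end



context bt begin

lemma orbit_U:
  assumes c: "legal_colouring E VX VY X Y c" and M: "perm_group X M" and N: "perm_group Y N"
  shows "orbit (U_c E VX VY X Y c M N) w = {v. labc c v \<in> orbit (if w \<in> VX then N else M) (labc c w)}"
proof -
  let ?l = "labc c" let ?U = "U_c E VX VY X Y c M N" let ?G = "if w \<in> VX then N else M"
  have l: "legal_lab ?l" using legal_labc[OF c] .
  obtain u where e: "E u w" using ex_nbr[of w] sym by blast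
  have FG: "Fs M N u = ?G" using side[OF e] unfolding Fs_def by simp
  have lw: "?l w \<in> Z u" using lab_Z[OF l e] .
  show ?thesis
  proof (intro set_eqI iffI)
    fix v assume "v \<in> orbit ?U w"
    then obtain g where g: "g \<in> ?U" "v = g w" unfolding orbit_def by blast
    have ga: "g \<in> Aut E" "local_action E c g u (Z u) \<in> Fs M N u" using g(1) unfolding U_c_iff by auto
    have "local_action E c g u (Z u) (?l w) = ?l (g w)"
      using la[OF c ga(1) lw] nb_eq[OF l e] by simp
    hence "?l v = (\<lambda>f. f (?l w)) (local_action E c g u (Z u))" using g(2) by simp
    moreover have "local_action E c g u (Z u) \<in> ?G" using ga(2) FG by simp
    ultimately show "v \<in> {v. ?l v \<in> orbit ?G (?l w)}" unfolding orbit_def by blast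
  next
    fix v assume "v \<in> {v. ?l v \<in> orbit ?G (?l w)}"
    then obtain f where f: "f \<in> ?G" "?l v = f (?l w)" unfolding orbit_def by auto
    show "v \<in> orbit ?U w"
    proof (cases "w \<in> VX")
      case True
      have fN: "f \<in> N" using f True by simp
      have "?l w \<in> Y" using lab_side[OF l] True by simp
      hence "?l v \<in> Y" using f(2) pgD(4)[OF N fN] by (simp add: permutes_in_image)
      hence "v \<in> VX" using lab_side[OF l] by simp
      then obtain g where "g \<in> ?U" "g w = v"
        using twistU[OF c M N pgD(1)[OF M] fN, of w v] True f(2) by auto
      thus ?thesis unfolding orbit_def by blast
    next
      case False
      have fM: "f \<in> M" using f False by simp
      have "?l w \<in> X" using lab_side[OF l] False by simp
      hence "?l v \<in> X" using f(2) pgD(4)[OF M fM] by (simp add: permutes_in_image)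
      hence "v \<notin> VX" using lab_side[OF l] by simp
      then obtain g where "g \<in> ?U" "g w = v"
        using twistU[OF c M N fM pgD(1)[OF N], of w v] False f(2) by auto
      thus ?thesis unfolding orbit_def by blast
    qed
  qed
qed

lemma orbit_sub: assumes "perm_group S G" "x \<in> S" shows "orbit G x \<subseteq> S"
proof
  fix y assume "y \<in> orbit G x"
  then obtain g where "g \<in> G" "y = g x" unfolding orbit_def by blast
  thus "y \<in> S" using pgD(4)[OF assms(1)] assms(2) by (simp add: permutes_in_image)
qed

lemma orbit_self: assumes "perm_group S G" shows "x \<in> orbit G x"
proof -
  have "id \<in> G" using pgD(1)[OF assms] .
  hence "id x \<in> (\<lambda>g. g x) ` G" by (rule imageI)
  thus ?thesis unfolding orbit_def by simp
qed

lemma part1: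
  assumes c: "legal_colouring E VX VY X Y c" and M: "perm_group X M" and N: "perm_group Y N"
    and D: "\<Delta> \<subseteq> X \<union> Y"
  shows "(is_orbit X M \<Delta> \<or> is_orbit Y N \<Delta>) \<longleftrightarrow>
            is_orbit UNIV (U_c E VX VY X Y c M N) (snd ` {a \<in> arcs E. c a \<in> \<Delta>})"
proof -
  let ?l = "labc c" let ?U = "U_c E VX VY X Y c M N"
  have l: "legal_lab ?l" using legal_labc[OF c] .
  have S: "snd ` {a \<in> arcs E. c a \<in> \<Delta>} = {v. ?l v \<in> \<Delta>}"
  proof (intro set_eqI iffI)
    fix v assume "v \<in> snd ` {a \<in> arcs E. c a \<in> \<Delta>}"
    then obtain u where "E u v" "c (u, v) \<in> \<Delta>" unfolding arcs_def by auto
    thus "v \<in> {v. ?l v \<in> \<Delta>}" using labc_arc[OF c] by simp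
  next
    fix v assume v: "v \<in> {v. ?l v \<in> \<Delta>}"
    obtain u where e: "E u v" using ex_nbr[of v] sym by blast
    hence "(u, v) \<in> {a \<in> arcs E. c a \<in> \<Delta>}" using v labc_arc[OF c e] unfolding arcs_def by simp
    thus "v \<in> snd ` {a \<in> arcs E. c a \<in> \<Delta>}" by force
  qed
  have key: "\<Delta> = orbit G x" if G: "perm_group Z0 G" and Z0: "Z0 \<subseteq> X \<union> Y" and x: "x \<in> Z0"
     and eq: "{v. ?l v \<in> \<Delta>} = {v. ?l v \<in> orbit G x}" for G Z0 x
  proof
    show "\<Delta> \<subseteq> orbit G x"
    proof
      fix d assume "d \<in> \<Delta>"
      then obtain v where "?l v = d" using lab_surj[OF l] D by blast
      thus "d \<in> orbit G x" using eq \<open>d \<in> \<Delta>\<close> by blast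
    qed
    show "orbit G x \<subseteq> \<Delta>"
    proof
      fix d assume d: "d \<in> orbit G x"
      hence "d \<in> X \<union> Y" using orbit_sub[OF G x] Z0 by blast
      then obtain v where "?l v = d" using lab_surj[OF l] by blast
      thus "d \<in> \<Delta>" using eq d by blast
    qed
  qed
  show ?thesis
  proof
    assume "is_orbit X M \<Delta> \<or> is_orbit Y N \<Delta>"
    thus "is_orbit UNIV ?U (snd ` {a \<in> arcs E. c a \<in> \<Delta>})"
    proof
      assume "is_orbit X M \<Delta>"
      then obtain x where x: "x \<in> X" "\<Delta> = orbit M x" unfolding is_orbit_def by blast
      obtain w where w: "?l w = x" using lab_surj[OF l] x by blast
      hence "w \<notin> VX" using lab_side(1)[OF l, of w] x by simp
      hence "orbit ?U w = {v. ?l v \<in> \<Delta>}" using orbit_U[OF c M N, of w] x w by simp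
      thus ?thesis unfolding is_orbit_def S by blast
    next
      assume "is_orbit Y N \<Delta>"
      then obtain x where x: "x \<in> Y" "\<Delta> = orbit N x" unfolding is_orbit_def by blast
      obtain w where w: "?l w = x" using lab_surj[OF l] x by blast
      hence "w \<in> VX" using lab_side(2)[OF l, of w] x by simp
      hence "orbit ?U w = {v. ?l v \<in> \<Delta>}" using orbit_U[OF c M N, of w] x w by simp
      thus ?thesis unfolding is_orbit_def S by blast
    qed
  next
    assume "is_orbit UNIV ?U (snd ` {a \<in> arcs E. c a \<in> \<Delta>})"
    then obtain w where w: "{v. ?l v \<in> \<Delta>} = orbit ?U w" unfolding is_orbit_def S by blast
    show "is_orbit X M \<Delta> \<or> is_orbit Y N \<Delta>"
    proof (cases "w \<in> VX")
      case True
      have "?l w \<in> Y" using lab_side[OF l] True by simp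
      moreover have "\<Delta> = orbit N (?l w)"
        using key[OF N _ calculation] w orbit_U[OF c M N, of w] True by simp
      ultimately show ?thesis unfolding is_orbit_def by blast
    next
      case False
      have "?l w \<in> X" using lab_side[OF l] False by simp
      moreover have "\<Delta> = orbit M (?l w)"
        using key[OF M _ calculation] w orbit_U[OF c M N, of w] False by simp
      ultimately show ?thesis unfolding is_orbit_def by blast
    qed
  qed
qed

end



context bt begin

lemma induced_U:
  assumes c: "legal_colouring E VX VY X Y c" and M: "perm_group X M" and N: "perm_group Y N"
  shows "induced_perm_iso E (U_c E VX VY X Y c M N) v (Z v) (Fs M N v)"
proof -
  let ?l = "labc c" let ?U = "U_c E VX VY X Y c M N"
  have l: "legal_lab ?l" using legal_labc[OF c] .
  have bl: "bij_betw ?l (nbrs E v) (Z v)" using l unfolding legal_lab_def by blast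
  have ti: "the_inv_into (nbrs E v) ?l x = nb ?l v x" if x: "x \<in> Z v" for x
  proof (rule the_inv_into_f_eq)
    show "inj_on ?l (nbrs E v)" using bl bij_betw_def by blast
    show "?l (nb ?l v x) = x" using nb[OF l x] by blast
    show "nb ?l v x \<in> nbrs E v" using nb[OF l x] unfolding nbrs_def by blast
  qed
  have ind: "(\<lambda>x. if x \<in> Z v then ?l (h (the_inv_into (nbrs E v) ?l x)) else x) = local_action E c h v (Z v)"
    if h: "h \<in> ?U" for h
  proof
    fix x
    have ha: "h \<in> Aut E" using h U_sub by blast
    show "(if x \<in> Z v then ?l (h (the_inv_into (nbrs E v) ?l x)) else x) = local_action E c h v (Z v) x"
      using ti la[OF c ha] la_out by simp
  qed
  have "(\<lambda>h. (\<lambda>x. if x \<in> Z v then ?l (h (the_inv_into (nbrs E v) ?l x)) else x)) ` {h \<in> ?U. h v = v}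
        = (\<lambda>h. local_action E c h v (Z v)) ` {h \<in> ?U. h v = v}"
    using ind by (intro image_cong) auto
  also have "\<dots> = Fs M N v"
  proof
    show "(\<lambda>h. local_action E c h v (Z v)) ` {h \<in> ?U. h v = v} \<subseteq> Fs M N v"
      unfolding U_c_iff by blast
    show "Fs M N v \<subseteq> (\<lambda>h. local_action E c h v (Z v)) ` {h \<in> ?U. h v = v}"
    proof
      fix f assume f: "f \<in> Fs M N v"
      show "f \<in> (\<lambda>h. local_action E c h v (Z v)) ` {h \<in> ?U. h v = v}"
      proof (cases "v \<in> VX")
        case True
        have fM: "f \<in> M" using f True unfolding Fs_def by simp
        have "?l v \<in> Y" using lab_side(2)[OF l, of v] True by simp
        hence "f (?l v) = ?l v" using pgD(4)[OF M fM] disj by (meson disjoint_iff permutes_not_in)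
        then obtain g where "g \<in> ?U" "g v = v" "local_action E c g v (Z v) = f"
          using twistU[OF c M N fM pgD(1)[OF N], of v v] True by auto
        thus ?thesis by force
      next
        case False
        have fN: "f \<in> N" using f False unfolding Fs_def by simp
        have "?l v \<in> X" using lab_side(1)[OF l, of v] False by simp
        hence "f (?l v) = ?l v" using pgD(4)[OF N fN] disj by (meson disjoint_iff permutes_not_in)
        then obtain g where "g \<in> ?U" "g v = v" "local_action E c g v (Z v) = f"
          using twistU[OF c M N pgD(1)[OF M] fN, of v v] False by auto
        thus ?thesis by force
      qed
    qed
  qed
  finally show ?thesis unfolding induced_perm_iso_def using bl by blast
qed

lemma part4:
  assumes c: "legal_colouring E VX VY X Y c" and M: "perm_group X M" and N: "perm_group Y N"
  shows "locally_MN E VX VY X Y M N (U_c E VX VY X Y c M N)"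
proof -
  have "\<forall>v\<in>VX. induced_perm_iso E (U_c E VX VY X Y c M N) v X M"
    using induced_U[OF c M N] unfolding Z_def Fs_def by (metis (full_types))
  moreover have "\<forall>v\<in>VY. induced_perm_iso E (U_c E VX VY X Y c M N) v Y N"
    using induced_U[OF c M N] inVY unfolding Z_def Fs_def by (metis (full_types))
  ultimately show ?thesis unfolding locally_MN_def using U_sub U_group[OF c M N] U_VX U_VY by blast
qed

lemma img3: "a ` S = S \<Longrightarrow> b ` S = S \<Longrightarrow> d ` S = S \<Longrightarrow> (a \<circ> b \<circ> d) ` S = S"
proof -
  assume "a ` S = S" "b ` S = S" "d ` S = S"
  moreover have "(a \<circ> b \<circ> d) ` S = a ` b ` d ` S" by (simp add: image_image comp_def)
  ultimately show ?thesis by simp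
qed

lemma la_conj:
  assumes c1: "legal_colouring E VX VY X Y c1" and c2: "legal_colouring E VX VY X Y c2"
    and g: "g \<in> Aut E" "g ` VX = VX" and gl: "\<forall>v. labc c2 (g v) = labc c1 v"
    and h: "h \<in> Aut E"
  shows "local_action E c2 (g \<circ> h \<circ> inv g) v (Z v) = local_action E c1 h (inv g v) (Z (inv g v))"
proof
  fix x
  let ?l1 = "labc c1" and ?l2 = "labc c2"
  have l1: "legal_lab ?l1" using legal_labc[OF c1] .
  have l2: "legal_lab ?l2" using legal_labc[OF c2] .
  have b: "bij g" using AutD(1)[OF g(1)] .
  have ig: "inv g \<in> Aut E" "inv g ` VX = VX" using Aut_inv[OF g(1)] Aut_inv_VX[OF g] by auto
  have ZZ: "Z (inv g v) = Z v" using pres_Z[OF ig] .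
  have gig: "g (inv g w) = w" for w using b by (simp add: bij_is_surj surj_f_inv_f)
  have ghg: "g \<circ> h \<circ> inv g \<in> Aut E" using Aut_comp[OF Aut_comp[OF g(1) h] ig(1)] .
  show "local_action E c2 (g \<circ> h \<circ> inv g) v (Z v) x = local_action E c1 h (inv g v) (Z (inv g v)) x"
  proof (cases "x \<in> Z v")
    case True
    let ?u = "nb ?l2 v x"
    have e: "E v ?u" and lu: "?l2 ?u = x" using nb[OF l2 True] by auto
    have e2: "E (inv g v) (inv g ?u)" using AutD(2)[OF ig(1)] e by blast
    have "?l1 (inv g ?u) = x" using gl gig lu by metis
    hence nb1: "nb ?l1 (inv g v) x = inv g ?u" using nb_eq[OF l1 e2] by simp
    have "local_action E c2 (g \<circ> h \<circ> inv g) v (Z v) x = ?l2 (g (h (inv g ?u)))"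
      using la[OF c2 ghg True] by simp
    also have "\<dots> = ?l1 (h (inv g ?u))" using gl by simp
    also have "\<dots> = local_action E c1 h (inv g v) (Z (inv g v)) x"
      using la[OF c1 h, of x "inv g v"] True ZZ nb1 by simp
    finally show ?thesis .
  next
    case False thus ?thesis using la_out[of x v] la_out[of x "inv g v"] ZZ by simp
  qed
qed

lemma part2:
  assumes c1: "legal_colouring E VX VY X Y c1" and c2: "legal_colouring E VX VY X Y c2"
  shows "\<exists>g\<in>Aut E. U_c E VX VY X Y c2 M N = (\<lambda>h. g \<circ> h \<circ> inv g) ` U_c E VX VY X Y c1 M N"
proof -
  let ?l1 = "labc c1" and ?l2 = "labc c2"
  have l1: "legal_lab ?l1" using legal_labc[OF c1] .
  have l2: "legal_lab ?l2" using legal_labc[OF c2] .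
  obtain r where r: "r \<in> VX" using ex_VX by blast
  have "?l1 r \<in> Y" using lab_side(2)[OF l1, of r] r by simp
  then obtain r' where r': "?l2 r' = ?l1 r" using lab_surj[OF l2] by blast
  hence "r' \<in> VX" using lab_side(2)[OF l2, of r'] \<open>?l1 r \<in> Y\<close> by simp
  then obtain g where g: "g \<in> Aut E" "g ` VX = VX" "\<forall>v. ?l2 (g v) = ?l1 v"
    using twist[OF l1 l2, of id r r'] r r' by auto
  have b: "bij g" using AutD(1)[OF g(1)] .
  have ig: "inv g \<in> Aut E" "inv g ` VX = VX" using Aut_inv[OF g(1)] Aut_inv_VX[OF g(1,2)] by auto
  have gig: "g \<circ> inv g = id" "inv g \<circ> g = id" using comp_inv_id[OF b] by auto
  have U2: "U_c E VX VY X Y c2 M N = (\<lambda>h. g \<circ> h \<circ> inv g) ` U_c E VX VY X Y c1 M N"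
  proof
    show "U_c E VX VY X Y c2 M N \<subseteq> (\<lambda>h. g \<circ> h \<circ> inv g) ` U_c E VX VY X Y c1 M N"
    proof
      fix h2 assume h2: "h2 \<in> U_c E VX VY X Y c2 M N"
      have h2a: "h2 \<in> Aut E" "h2 ` VX = VX" "\<forall>v. local_action E c2 h2 v (Z v) \<in> Fs M N v"
        using h2 unfolding U_c_iff by auto
      define h1 where "h1 = inv g \<circ> h2 \<circ> g"
      have h1a: "h1 \<in> Aut E" unfolding h1_def using Aut_comp[OF Aut_comp[OF ig(1) h2a(1)] g(1)] .
      have h1V: "h1 ` VX = VX" unfolding h1_def using img3 ig(2) h2a(2) g(2) by blast
      have eq: "g \<circ> h1 \<circ> inv g = h2" unfolding h1_def using gig by (simp add: fun_eq_iff)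
      have "local_action E c1 h1 w (Z w) \<in> Fs M N w" for w
      proof -
        have "inv g (g w) = w" using b by (simp add: bij_is_inj)
        hence "local_action E c1 h1 w (Z w) = local_action E c2 h2 (g w) (Z (g w))"
          using la_conj[OF c1 c2 g(1,2) g(3) h1a, of "g w"] eq by simp
        thus ?thesis using h2a(3) pres_Fs[OF g(1,2)] by metis
      qed
      hence "h1 \<in> U_c E VX VY X Y c1 M N" unfolding U_c_iff using h1a h1V by blast
      thus "h2 \<in> (\<lambda>h. g \<circ> h \<circ> inv g) ` U_c E VX VY X Y c1 M N" using eq by force
    qed
    show "(\<lambda>h. g \<circ> h \<circ> inv g) ` U_c E VX VY X Y c1 M N \<subseteq> U_c E VX VY X Y c2 M N"
    proof
      fix h2 assume "h2 \<in> (\<lambda>h. g \<circ> h \<circ> inv g) ` U_c E VX VY X Y c1 M N"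
      then obtain h1 where h1: "h1 \<in> U_c E VX VY X Y c1 M N" "h2 = g \<circ> h1 \<circ> inv g" by blast
      have h1a: "h1 \<in> Aut E" "h1 ` VX = VX" "\<forall>v. local_action E c1 h1 v (Z v) \<in> Fs M N v"
        using h1(1) unfolding U_c_iff by auto
      have h2a: "h2 \<in> Aut E" unfolding h1(2) using Aut_comp[OF Aut_comp[OF g(1) h1a(1)] ig(1)] .
      have h2V: "h2 ` VX = VX" unfolding h1(2) using img3 ig(2) h1a(2) g(2) by blast
      have "local_action E c2 h2 v (Z v) \<in> Fs M N v" for v
        using la_conj[OF c1 c2 g(1,2) g(3) h1a(1), of v] h1(2) h1a(3) pres_Fs[OF ig] by metis
      thus "h2 \<in> U_c E VX VY X Y c2 M N" unfolding U_c_iff using h2a h2V by blast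
    qed
  qed
  thus ?thesis using g(1) by blast
qed

end



definition ptp where
  "ptp \<Omega> S U \<longleftrightarrow> U \<subseteq> S \<and> (\<forall>f\<in>U. \<exists>F. finite F \<and> F \<subseteq> \<Omega> \<and> {g\<in>S. \<forall>x\<in>F. g x = f x} \<subseteq> U)"

lemma ptpD: "ptp \<Omega> S A \<Longrightarrow> A \<subseteq> S"
  "ptp \<Omega> S A \<Longrightarrow> f \<in> A \<Longrightarrow> \<exists>F. finite F \<and> F \<subseteq> \<Omega> \<and> {g\<in>S. \<forall>x\<in>F. g x = f x} \<subseteq> A"
  unfolding ptp_def by auto

lemma ptpI: "A \<subseteq> S \<Longrightarrow> (\<And>f. f \<in> A \<Longrightarrow> \<exists>F. finite F \<and> F \<subseteq> \<Omega> \<and> {g\<in>S. \<forall>x\<in>F. g x = f x} \<subseteq> A) \<Longrightarrow> ptp \<Omega> S A"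
  unfolding ptp_def by auto

lemma ptp_Int: assumes A: "ptp \<Omega> S A" and B: "ptp \<Omega> S B" shows "ptp \<Omega> S (A \<inter> B)"
proof (rule ptpI)
  show "A \<inter> B \<subseteq> S" using ptpD(1)[OF A] by (rule le_infI1)
  fix f assume f: "f \<in> A \<inter> B"
  obtain F1 where 1: "finite F1" "F1 \<subseteq> \<Omega>" "{g\<in>S. \<forall>x\<in>F1. g x = f x} \<subseteq> A"
    using ptpD(2)[OF A, of f] f by auto
  obtain F2 where 2: "finite F2" "F2 \<subseteq> \<Omega>" "{g\<in>S. \<forall>x\<in>F2. g x = f x} \<subseteq> B"
    using ptpD(2)[OF B, of f] f by auto
  have s1: "{g\<in>S. \<forall>x\<in>F1 \<union> F2. g x = f x} \<subseteq> {g\<in>S. \<forall>x\<in>F1. g x = f x}" by auto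
  have s2: "{g\<in>S. \<forall>x\<in>F1 \<union> F2. g x = f x} \<subseteq> {g\<in>S. \<forall>x\<in>F2. g x = f x}" by auto
  have "{g\<in>S. \<forall>x\<in>F1 \<union> F2. g x = f x} \<subseteq> A \<inter> B"
    using subset_trans[OF s1 1(3)] subset_trans[OF s2 2(3)] by (rule Int_greatest)
  moreover have "finite (F1 \<union> F2)" using 1(1) 2(1) by simp
  moreover have "F1 \<union> F2 \<subseteq> \<Omega>" using 1(2) 2(2) by simp
  ultimately show "\<exists>F. finite F \<and> F \<subseteq> \<Omega> \<and> {g\<in>S. \<forall>x\<in>F. g x = f x} \<subseteq> A \<inter> B"
    by (intro exI[of _ "F1 \<union> F2"]) simp
qed

lemma ptp_Union: assumes K: "\<forall>A\<in>K. ptp \<Omega> S A" shows "ptp \<Omega> S (\<Union>K)"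
proof (rule ptpI)
  show "\<Union>K \<subseteq> S"
  proof (rule Union_least)
    fix A assume "A \<in> K" hence "ptp \<Omega> S A" using K by simp
    thus "A \<subseteq> S" by (rule ptpD(1))
  qed
  fix f assume "f \<in> \<Union>K"
  then obtain A where A: "A \<in> K" "f \<in> A" by (rule UnionE)
  have pA: "ptp \<Omega> S A" using K A(1) by simp
  obtain F where F: "finite F" "F \<subseteq> \<Omega>" "{g\<in>S. \<forall>x\<in>F. g x = f x} \<subseteq> A"
    using ptpD(2)[OF pA A(2)] by auto
  have "A \<subseteq> \<Union>K" using A(1) by (rule Union_upper)
  hence "{g\<in>S. \<forall>x\<in>F. g x = f x} \<subseteq> \<Union>K" using F(3) by (rule subset_trans[rotated])
  thus "\<exists>F. finite F \<and> F \<subseteq> \<Omega> \<and> {g\<in>S. \<forall>x\<in>F. g x = f x} \<subseteq> \<Union>K"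
    using F(1,2) by (intro exI[of _ F]) simp
qed

lemma perm_top_ist: "istopology (ptp \<Omega> S)"
proof -
  have 1: "\<forall>A B. ptp \<Omega> S A \<longrightarrow> ptp \<Omega> S B \<longrightarrow> ptp \<Omega> S (A \<inter> B)" using ptp_Int by blast
  have 2: "\<forall>K. (\<forall>A\<in>K. ptp \<Omega> S A) \<longrightarrow> ptp \<Omega> S (\<Union>K)" using ptp_Union by blast
  show ?thesis unfolding istopology_def by (rule conjI[OF 1 2])
qed

lemma ptp_eq: "perm_topology \<Omega> S = topology (ptp \<Omega> S)"
  unfolding perm_topology_def ptp_def by simp

lemma perm_top_open:
  "openin (perm_topology \<Omega> S) U \<longleftrightarrow>
     U \<subseteq> S \<and> (\<forall>f\<in>U. \<exists>F. finite F \<and> F \<subseteq> \<Omega> \<and> {g\<in>S. \<forall>x\<in>F. g x = f x} \<subseteq> U)"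
  unfolding ptp_eq topology_inverse'[OF perm_top_ist] ptp_def by (rule refl)

lemma perm_top_space: "topspace (perm_topology \<Omega> S) = S"
proof -
  have "openin (perm_topology \<Omega> S) S" unfolding perm_top_open by auto
  moreover have "U \<subseteq> S" if "openin (perm_topology \<Omega> S) U" for U using that unfolding perm_top_open by blast
  ultimately show ?thesis unfolding topspace_def by blast
qed

lemma perm_top_closed:
  "closedin (perm_topology \<Omega> S) C \<longleftrightarrow> C \<subseteq> S \<and>
     (\<forall>f\<in>S - C. \<exists>F. finite F \<and> F \<subseteq> \<Omega> \<and> {g\<in>S. \<forall>x\<in>F. g x = f x} \<inter> C = {})"
proof -
  have e: "{g\<in>S. P g} \<subseteq> S - C \<longleftrightarrow> {g\<in>S. P g} \<inter> C = {}" for P by blast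
  have "openin (perm_topology \<Omega> S) (S - C) \<longleftrightarrow>
     (\<forall>f\<in>S - C. \<exists>F. finite F \<and> F \<subseteq> \<Omega> \<and> {g\<in>S. \<forall>x\<in>F. g x = f x} \<inter> C = {})"
    unfolding perm_top_open e by simp
  thus ?thesis unfolding closedin_def perm_top_space by blast
qed

context bt begin

lemma part5:
  assumes c: "legal_colouring E VX VY X Y c" and M: "perm_group X M" and N: "perm_group Y N"
    and Mc: "closedin (perm_topology X (Sym X)) M" and Nc: "closedin (perm_topology Y (Sym Y)) N"
  shows "closedin (perm_topology UNIV (Aut E)) (U_c E VX VY X Y c M N)"
  unfolding perm_top_closed
proof (intro conjI ballI)
  let ?U = "U_c E VX VY X Y c M N" let ?l = "labc c"
  have l: "legal_lab ?l" using legal_labc[OF c] .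
  show "?U \<subseteq> Aut E" by (rule U_sub)
  fix f assume f: "f \<in> Aut E - ?U"
  have fa: "f \<in> Aut E" using f by blast
  show "\<exists>F. finite F \<and> F \<subseteq> UNIV \<and> {g \<in> Aut E. \<forall>x\<in>F. g x = f x} \<inter> ?U = {}"
  proof (cases "\<forall>v. f v \<in> VX \<longleftrightarrow> v \<in> VX")
    case False
    then obtain v where v: "\<not> (f v \<in> VX \<longleftrightarrow> v \<in> VX)" by blast
    have "{g \<in> Aut E. \<forall>x\<in>{v}. g x = f x} \<inter> ?U = {}"
    proof (rule ccontr)
      assume "\<not> ?thesis"
      then obtain g where g: "g \<in> ?U" "g v = f v" by blast
      have "g v \<in> VX \<longleftrightarrow> v \<in> VX" using pres g(1) U_sub U_VX by blast
      thus False using v g(2) by simp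
    qed
    thus ?thesis by blast
  next
    case True
    have fV: "f ` VX = VX"
    proof
      show "f ` VX \<subseteq> VX" using True by blast
      show "VX \<subseteq> f ` VX"
      proof
        fix w assume w: "w \<in> VX"
        obtain v where "f v = w" using AutD(1)[OF fa] by (metis bij_pointE)
        thus "w \<in> f ` VX" using True w by blast
      qed
    qed
    have "f \<notin> ?U" using f by blast
    hence "\<not> (\<forall>v. local_action E c f v (Z v) \<in> Fs M N v)" using fa fV unfolding U_c_iff by blast
    then obtain v where v: "local_action E c f v (Z v) \<notin> Fs M N v" by blast
    let ?s = "local_action E c f v (Z v)"
    have sp: "?s \<in> Sym (Z v)" using la_permutes[OF c fa fV] unfolding Sym_def by blast
    have cl: "closedin (perm_topology (Z v) (Sym (Z v))) (Fs M N v)"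
      using Mc Nc unfolding Z_def Fs_def by simp
    then obtain F0 where F0: "finite F0" "F0 \<subseteq> Z v"
        "{p \<in> Sym (Z v). \<forall>x\<in>F0. p x = ?s x} \<inter> Fs M N v = {}"
      using sp v unfolding perm_top_closed by blast
    let ?F = "insert v (nb ?l v ` F0)"
    have "{g \<in> Aut E. \<forall>x\<in>?F. g x = f x} \<inter> ?U = {}"
    proof (rule ccontr)
      assume "\<not> ?thesis"
      then obtain g where g: "g \<in> ?U" "\<forall>x\<in>?F. g x = f x" by blast
      have ga: "g \<in> Aut E" "g ` VX = VX" "local_action E c g v (Z v) \<in> Fs M N v"
        using g(1) unfolding U_c_iff by auto
      have "local_action E c g v (Z v) \<in> Sym (Z v)" using la_permutes[OF c ga(1,2)] unfolding Sym_def by blast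
      moreover have "\<forall>x\<in>F0. local_action E c g v (Z v) x = ?s x"
      proof
        fix x assume x: "x \<in> F0"
        hence xz: "x \<in> Z v" using F0 by blast
        have "g (nb ?l v x) = f (nb ?l v x)" using g(2) x by blast
        thus "local_action E c g v (Z v) x = ?s x" using la[OF c ga(1) xz] la[OF c fa xz] by simp
      qed
      ultimately show False using F0(3) ga(3) by blast
    qed
    moreover have "finite ?F" using F0 by blast
    ultimately show ?thesis by blast
  qed
qed

end



locale p3 = bt E VX VY X Y for E :: "'v \<Rightarrow> 'v \<Rightarrow> bool" and VX VY :: "'v set" and X Y :: "'c set" +
  fixes M N :: "('c \<Rightarrow> 'c) set" and H :: "('v \<Rightarrow> 'v) set"
  assumes M: "perm_group X M" and N: "perm_group Y N"
    and Mt: "transitive_on X M" and Nt: "transitive_on Y N"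
    and HL: "locally_MN E VX VY X Y M N H"
begin

lemma H_Aut: "g \<in> H \<Longrightarrow> g \<in> Aut E" using HL unfolding locally_MN_def by blast
lemma H_VX: "g \<in> H \<Longrightarrow> g ` VX = VX" using HL unfolding locally_MN_def by blast
lemma H_pg: "perm_group UNIV H" using HL unfolding locally_MN_def by blast
lemma H_id: "id \<in> H" using pgD(1)[OF H_pg] .
lemma H_comp: "g \<in> H \<Longrightarrow> h \<in> H \<Longrightarrow> g \<circ> h \<in> H" using pgD(2)[OF H_pg] .
lemma H_inv: "g \<in> H \<Longrightarrow> inv g \<in> H" using pgD(3)[OF H_pg] .
lemma H_bij: "g \<in> H \<Longrightarrow> bij g" using AutD(1)[OF H_Aut] .
lemma H_inv_l: "g \<in> H \<Longrightarrow> inv g (g v) = v" using H_bij by (simp add: bij_is_inj)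
lemma H_inv_r: "g \<in> H \<Longrightarrow> g (inv g v) = v" using H_bij by (simp add: bij_is_surj surj_f_inv_f)
lemma H_pres: "g \<in> H \<Longrightarrow> g v \<in> VX \<longleftrightarrow> v \<in> VX" using pres[OF H_Aut H_VX] .

lemma Fs_pg: "perm_group (Z v) (Fs M N v)" using pg_Fs[OF M N] .
lemma Fs_trans: "x \<in> Z v \<Longrightarrow> y \<in> Z v \<Longrightarrow> \<exists>f\<in>Fs M N v. f x = y"
  using Mt Nt unfolding transitive_on_def Z_def Fs_def by (auto split: if_splits)

definition ind :: "('v \<Rightarrow> 'c) \<Rightarrow> ('v \<Rightarrow> 'v) \<Rightarrow> 'v \<Rightarrow> 'c \<Rightarrow> 'c" where
  "ind \<phi> h v = (\<lambda>x. if x \<in> Z v then \<phi> (h (the_inv_into (nbrs E v) \<phi> x)) else x)"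

lemma iso: "induced_perm_iso E H v (Z v) (Fs M N v)"
  using HL inVY unfolding locally_MN_def Z_def Fs_def by (cases "v \<in> VX") auto

definition phi where "phi v = (SOME \<phi>. bij_betw \<phi> (nbrs E v) (Z v) \<and> (\<lambda>h. ind \<phi> h v) ` {h \<in> H. h v = v} = Fs M N v)"

lemma phi: "bij_betw (phi v) (nbrs E v) (Z v)" "(\<lambda>h. ind (phi v) h v) ` {h \<in> H. h v = v} = Fs M N v"
proof -
  have "\<exists>\<phi>. bij_betw \<phi> (nbrs E v) (Z v) \<and> (\<lambda>h. ind \<phi> h v) ` {h \<in> H. h v = v} = Fs M N v"
    using iso[of v] unfolding induced_perm_iso_def ind_def by blast
  from someI_ex[OF this] show "bij_betw (phi v) (nbrs E v) (Z v)" "(\<lambda>h. ind (phi v) h v) ` {h \<in> H. h v = v} = Fs M N v"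
    unfolding phi_def by auto
qed

lemma ind_Fs: "k \<in> H \<Longrightarrow> k w = w \<Longrightarrow> ind (phi w) k w \<in> Fs M N w"
  using phi(2)[of w] by blast

definition horb where "horb v = (\<lambda>h. h v) ` H"
definition rep where "rep v = (SOME w. w \<in> horb v)"

lemma horb_self: "v \<in> horb v"
proof -
  have "id v \<in> (\<lambda>h. h v) ` H" by (rule imageI[OF H_id])
  thus ?thesis unfolding horb_def by simp
qed

lemma horb_eq: assumes g: "g \<in> H" shows "horb (g v) = horb v"
proof
  show "horb (g v) \<subseteq> horb v"
  proof
    fix x assume "x \<in> horb (g v)"
    then obtain h where "h \<in> H" "x = h (g v)" unfolding horb_def by blast
    hence "h \<circ> g \<in> H" "x = (h \<circ> g) v" using H_comp g by auto
    thus "x \<in> horb v" unfolding horb_def by blast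
  qed
  show "horb v \<subseteq> horb (g v)"
  proof
    fix x assume "x \<in> horb v"
    then obtain h where "h \<in> H" "x = h v" unfolding horb_def by blast
    hence "h \<circ> inv g \<in> H" "x = (h \<circ> inv g) (g v)" using H_comp H_inv g H_inv_l by auto
    thus "x \<in> horb (g v)" unfolding horb_def by blast
  qed
qed

lemma rep_in: "rep v \<in> horb v" unfolding rep_def using horb_self by (rule someI)

lemma rep_eq: "g \<in> H \<Longrightarrow> rep (g v) = rep v" unfolding rep_def using horb_eq by simp

definition hv where "hv v = (SOME h. h \<in> H \<and> h (rep v) = v)"

lemma hv: "hv v \<in> H" "hv v (rep v) = v"
proof -
  obtain k where k: "k \<in> H" "rep v = k v" using rep_in unfolding horb_def by blast
  hence "inv k \<in> H \<and> inv k (rep v) = v" using H_inv H_inv_l by simp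
  hence "\<exists>h. h \<in> H \<and> h (rep v) = v" by blast
  from someI_ex[OF this] show "hv v \<in> H" "hv v (rep v) = v" unfolding hv_def by auto
qed

lemma hv_inv: "inv (hv v) v = rep v"
  using H_inv_l[OF hv(1)[of v], of "rep v"] hv(2)[of v] by simp

lemma rep_side: "rep v \<in> VX \<longleftrightarrow> v \<in> VX" using H_pres[OF hv(1), of v "rep v"] hv(2) by simp

lemma rep_Z: "Z (rep v) = Z v" using rep_side unfolding Z_def by simp
lemma rep_Fs: "Fs M N (rep v) = Fs M N v" using rep_side unfolding Fs_def by simp

lemma Aut_nbrs: assumes "g \<in> Aut E" shows "bij_betw g (nbrs E w) (nbrs E (g w))"
proof -
  have b: "bij g" using AutD(1)[OF assms] .
  have "g ` nbrs E w = nbrs E (g w)"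
  proof
    show "g ` nbrs E w \<subseteq> nbrs E (g w)" using AutD(2)[OF assms] unfolding nbrs_def by auto
    show "nbrs E (g w) \<subseteq> g ` nbrs E w"
    proof
      fix u assume "u \<in> nbrs E (g w)"
      hence "E (g w) u" unfolding nbrs_def by simp
      moreover have "g (inv g u) = u" using b by (simp add: bij_is_surj surj_f_inv_f)
      ultimately have "E (g w) (g (inv g u))" by simp
      hence "inv g u \<in> nbrs E w" using AutD(2)[OF assms] unfolding nbrs_def by simp
      thus "u \<in> g ` nbrs E w" using \<open>g (inv g u) = u\<close> by force
    qed
  qed
  thus ?thesis using b bij_is_inj inj_on_subset unfolding bij_betw_def by blast
qed

definition psi where "psi v u = phi (rep v) (inv (hv v) u)"

lemma psi_bij: "bij_betw (psi v) (nbrs E v) (Z v)"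
proof -
  have 1: "bij_betw (inv (hv v)) (nbrs E v) (nbrs E (rep v))"
    using Aut_nbrs[OF H_Aut[OF H_inv[OF hv(1)[of v]]], of v] hv_inv by simp
  have "bij_betw (phi (rep v) \<circ> inv (hv v)) (nbrs E v) (Z v)"
    using bij_betw_trans[OF 1 phi(1)] rep_Z by simp
  thus ?thesis unfolding psi_def comp_def by simp
qed

lemma psi_compat:
  assumes g: "g \<in> H" and u: "E v u"
  shows "psi (g v) (g u) = ind (phi (rep v)) (inv (hv (g v)) \<circ> g \<circ> hv v) (rep v) (psi v u)"
    "inv (hv (g v)) \<circ> g \<circ> hv v \<in> H" "(inv (hv (g v)) \<circ> g \<circ> hv v) (rep v) = rep v"
proof -
  let ?w = "rep v" let ?k = "inv (hv (g v)) \<circ> g \<circ> hv v"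
  show kH: "?k \<in> H" using H_comp H_inv hv(1) g by metis
  have rg: "rep (g v) = ?w" using rep_eq[OF g] .
  show kw: "?k ?w = ?w"
  proof -
    have "?k ?w = inv (hv (g v)) (g v)" using hv(2)[of v] by simp
    also have "\<dots> = ?w" using hv_inv[of "g v"] rg by simp
    finally show ?thesis .
  qed
  let ?u' = "inv (hv v) u"
  have u': "?u' \<in> nbrs E ?w"
  proof -
    have "E (inv (hv v) v) ?u'" using AutD(2)[OF H_Aut[OF H_inv[OF hv(1)]]] u by blast
    moreover have "inv (hv v) v = ?w" by (rule hv_inv)
    ultimately show ?thesis unfolding nbrs_def by simp
  qed
  have z: "psi v u = phi ?w ?u'" unfolding psi_def ..
  have zZ: "phi ?w ?u' \<in> Z ?w" using phi(1)[of ?w] u' bij_betwE by blast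
  have ti: "the_inv_into (nbrs E ?w) (phi ?w) (phi ?w ?u') = ?u'"
    using phi(1)[of ?w] u' bij_betw_imp_inj_on the_inv_into_f_f by metis
  have "hv v ?u' = u" using H_inv_r[OF hv(1)] by simp
  hence "?k ?u' = inv (hv (g v)) (g u)" by simp
  hence "ind (phi ?w) ?k ?w (psi v u) = phi ?w (inv (hv (g v)) (g u))"
    unfolding ind_def z using zZ ti by simp
  also have "\<dots> = psi (g v) (g u)" unfolding psi_def rg ..
  finally show "psi (g v) (g u) = ind (phi ?w) ?k ?w (psi v u)" by simp
qed

end



context p3 begin

definition r0 where "r0 = (SOME v. v \<in> VX)"
definition y0 where "y0 = (SOME y. y \<in> Y)"

lemma r0: "r0 \<in> VX" unfolding r0_def using ex_VX by (metis someI_ex)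
lemma y0: "y0 \<in> Y" unfolding y0_def using Yne by (metis all_not_in_conv someI_ex)

definition st where
  "st = treerec r0 (y0, id) (\<lambda>v s. (snd s (psi (par r0 v) v), SOME f. f \<in> Fs M N v \<and> f (psi v (par r0 v)) = fst s))"

definition lab where "lab v = fst (st v)"
definition fv where "fv v = snd (st v)"

lemma st_root: "lab r0 = y0" "fv r0 = id"
  unfolding lab_def fv_def st_def treerec_root by simp_all

lemma st_step: assumes "v \<noteq> r0"
  shows "lab v = fv (par r0 v) (psi (par r0 v) v)"
    "fv v = (SOME f. f \<in> Fs M N v \<and> f (psi v (par r0 v)) = lab (par r0 v))"
  unfolding lab_def fv_def st_def treerec_step[OF assms] by simp_all

lemma Fs_perm: "f \<in> Fs M N v \<Longrightarrow> f permutes Z v" using pgD(4)[OF Fs_pg] .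

lemma inv_st: "lab v \<in> (if v \<in> VX then Y else X) \<and> fv v \<in> Fs M N v \<and>
     (v \<noteq> r0 \<longrightarrow> fv v (psi v (par r0 v)) = lab (par r0 v))"
proof (induction v rule: tree_induct[of _ r0])
  case 1
  have "fv r0 \<in> Fs M N r0" unfolding st_root(2) by (rule pgD(1)[OF Fs_pg])
  thus ?case using st_root(1) r0 y0 by simp
next
  case (2 v)
  let ?p = "par r0 v"
  have e: "E ?p v" using par(1)[OF 2(1)] .
  have sd: "?p \<in> VX \<longleftrightarrow> v \<notin> VX" using side[OF e] .
  have "psi ?p v \<in> Z ?p" using psi_bij[of ?p] e unfolding nbrs_def by (auto dest: bij_betwE)
  hence "lab v \<in> Z ?p" using st_step(1)[OF 2(1)] Fs_perm 2(2) by (simp add: permutes_in_image)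
  hence l1: "lab v \<in> (if v \<in> VX then Y else X)" using sd unfolding Z_def by (auto split: if_splits)
  have "psi v ?p \<in> Z v" using psi_bij[of v] sym[OF e] unfolding nbrs_def by (auto dest: bij_betwE)
  moreover have "lab ?p \<in> Z v" using 2(2) sd unfolding Z_def by (auto split: if_splits)
  ultimately have "\<exists>f. f \<in> Fs M N v \<and> f (psi v ?p) = lab ?p" using Fs_trans by blast
  hence "fv v \<in> Fs M N v \<and> fv v (psi v ?p) = lab ?p" unfolding st_step(2)[OF 2(1)] by (rule someI_ex)
  thus ?case using l1 by blast
qed

lemma Q: "E v u \<Longrightarrow> lab u = fv v (psi v u)"
  using nbr_cases[of v u r0] st_step(1) inv_st by metis

lemma legal_lab_lab: "legal_lab lab"
  unfolding legal_lab_def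
proof
  fix v
  have "bij_betw (fv v) (Z v) (Z v)" using Fs_perm inv_st permutes_imp_bij by blast
  hence "bij_betw (fv v \<circ> psi v) (nbrs E v) (Z v)" using bij_betw_trans[OF psi_bij] by blast
  moreover have "\<forall>u\<in>nbrs E v. (fv v \<circ> psi v) u = lab u" using Q unfolding nbrs_def by simp
  ultimately show "bij_betw lab (nbrs E v) (Z v)"
    using bij_betw_cong[of "nbrs E v" "fv v \<circ> psi v" lab "Z v"] by simp
qed

definition cc where "cc = (\<lambda>a. lab (snd a))"

lemma cc_legal: "legal_colouring E VX VY X Y cc" unfolding cc_def using legal_col_of[OF legal_lab_lab] .

lemma labc_cc: "labc cc = lab" unfolding labc_def cc_def by simp

lemma H_sub: "H \<subseteq> U_c E VX VY X Y cc M N"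
proof
  fix g assume g: "g \<in> H"
  have ga: "g \<in> Aut E" "g ` VX = VX" using H_Aut H_VX g by auto
  have "local_action E cc g v (Z v) \<in> Fs M N v" for v
  proof -
    let ?w = "rep v" let ?k = "inv (hv (g v)) \<circ> g \<circ> hv v"
    let ?\<kappa> = "ind (phi ?w) ?k ?w" let ?a = "fv v" let ?b = "fv (g v)"
    have kH: "?k \<in> H" "?k ?w = ?w" using psi_compat(2,3)[OF g] ex_nbr[of v] by auto
    have kF: "?\<kappa> \<in> Fs M N v"
    proof -
      have "?\<kappa> \<in> Fs M N ?w" using ind_Fs[OF kH] .
      thus ?thesis unfolding rep_Fs .
    qed
    have aF: "?a \<in> Fs M N v" using inv_st by blast
    have bF: "?b \<in> Fs M N v" using inv_st pres_Fs[OF ga] by metis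
    have ap: "?a permutes Z v" using Fs_perm[OF aF] .
    have bp: "?b permutes Z v" using Fs_perm[OF bF] .
    have l: "legal_lab lab" by (rule legal_lab_lab)
    have eq: "local_action E cc g v (Z v) = ?b \<circ> ?\<kappa> \<circ> inv ?a"
    proof
      fix x
      show "local_action E cc g v (Z v) x = (?b \<circ> ?\<kappa> \<circ> inv ?a) x"
      proof (cases "x \<in> Z v")
        case True
        let ?u = "nb lab v x"
        have e: "E v ?u" and lu: "lab ?u = x" using nb[OF l True] by auto
        have xa: "?a (psi v ?u) = x" using Q[OF e] lu by simp
        have ia: "inv ?a x = psi v ?u" using permutes_inverses(2)[OF ap, of "psi v ?u"] unfolding xa .
        have e2: "E (g v) (g ?u)" using AutD(2)[OF ga(1)] e by blast
        have "local_action E cc g v (Z v) x = lab (g ?u)"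
          using la[OF cc_legal ga(1) True] labc_cc by simp
        also have "\<dots> = ?b (psi (g v) (g ?u))" using Q[OF e2] .
        also have "\<dots> = ?b (?\<kappa> (psi v ?u))" using psi_compat(1)[OF g e] by simp
        finally show ?thesis using ia by simp
      next
        case False
        have "inv ?a x = x" using permutes_inv[OF ap] False by (simp add: permutes_not_in)
        moreover have "?\<kappa> x = x" using False rep_Z unfolding ind_def by simp
        moreover have "?b x = x" using bp False by (simp add: permutes_not_in)
        ultimately show ?thesis using la_out[OF False] by simp
      qed
    qed
    have "inv ?a \<in> Fs M N v" using pgD(3)[OF Fs_pg aF] .
    thus ?thesis unfolding eq using pgD(2)[OF Fs_pg] bF kF by metis
  qed
  thus "g \<in> U_c E VX VY X Y cc M N" unfolding U_c_iff using ga by blast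
qed

end

context bt begin

lemma part3:
  assumes M: "perm_group X M" and N: "perm_group Y N"
    and Mt: "transitive_on X M" and Nt: "transitive_on Y N"
    and HL: "locally_MN E VX VY X Y M N H"
  shows "\<exists>c''. legal_colouring E VX VY X Y c'' \<and> H \<subseteq> U_c E VX VY X Y c'' M N"
proof -
  interpret p: p3 E VX VY X Y M N H using M N Mt Nt HL by unfold_locales
  show ?thesis using p.cc_legal p.H_sub by blast
qed

end


theorem theorem3p2:
  fixes E :: "'v \<Rightarrow> 'v \<Rightarrow> bool" and VX VY :: "'v set"
    and X Y :: "'c set" and M N :: "('c \<Rightarrow> 'c) set" and c :: "'v \<times> 'v \<Rightarrow> 'c"
  assumes disj: "X \<inter> Y = {}"
    and X2: "\<exists>x1\<in>X. \<exists>x2\<in>X. x1 \<noteq> x2"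
    and Y2: "\<exists>y1\<in>Y. \<exists>y2\<in>Y. y1 \<noteq> y2"
    and T: "biregular_tree E VX VY X Y"
    and M: "perm_group X M"
    and N: "perm_group Y N"
    and c: "legal_colouring E VX VY X Y c"
  shows "(\<forall>\<Delta>. \<Delta> \<subseteq> X \<union> Y \<longrightarrow>
           ((is_orbit X M \<Delta> \<or> is_orbit Y N \<Delta>) \<longleftrightarrow>
            is_orbit UNIV (U_c E VX VY X Y c M N) (snd ` {a \<in> arcs E. c a \<in> \<Delta>})))
    \<and> (\<forall>c1 c2. legal_colouring E VX VY X Y c1 \<and> legal_colouring E VX VY X Y c2 \<longrightarrow>
           (\<exists>g\<in>Aut E. U_c E VX VY X Y c2 M N = (\<lambda>h. g \<circ> h \<circ> inv g) ` U_c E VX VY X Y c1 M N))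
    \<and> (transitive_on X M \<and> transitive_on Y N \<longrightarrow>
           (\<forall>H. locally_MN E VX VY X Y M N H \<longrightarrow>
              (\<exists>c''. legal_colouring E VX VY X Y c'' \<and> H \<subseteq> U_c E VX VY X Y c'' M N)))
    \<and> locally_MN E VX VY X Y M N (U_c E VX VY X Y c M N)
    \<and> (closedin (perm_topology X (Sym X)) M \<and> closedin (perm_topology Y (Sym Y)) N \<longrightarrow>
           U_c E VX VY X Y c M N \<subseteq> Aut E \<and> perm_group UNIV (U_c E VX VY X Y c M N)
           \<and> closedin (perm_topology UNIV (Aut E)) (U_c E VX VY X Y c M N))"
proof -
  have Xne: "X \<noteq> {}" using X2 by blast
  have Yne: "Y \<noteq> {}" using Y2 by blast
  interpret bt E VX VY X Y using T disj Xne Yne by unfold_locales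
  have 1: "\<forall>\<Delta>. \<Delta> \<subseteq> X \<union> Y \<longrightarrow>
           ((is_orbit X M \<Delta> \<or> is_orbit Y N \<Delta>) \<longleftrightarrow>
            is_orbit UNIV (U_c E VX VY X Y c M N) (snd ` {a \<in> arcs E. c a \<in> \<Delta>}))"
    using part1[OF c M N] by blast
  have 2: "\<forall>c1 c2. legal_colouring E VX VY X Y c1 \<and> legal_colouring E VX VY X Y c2 \<longrightarrow>
           (\<exists>g\<in>Aut E. U_c E VX VY X Y c2 M N = (\<lambda>h. g \<circ> h \<circ> inv g) ` U_c E VX VY X Y c1 M N)"
    using part2 by blast
  have 3: "transitive_on X M \<and> transitive_on Y N \<longrightarrow>
           (\<forall>H. locally_MN E VX VY X Y M N H \<longrightarrow>
              (\<exists>c''. legal_colouring E VX VY X Y c'' \<and> H \<subseteq> U_c E VX VY X Y c'' M N))"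
    using part3[OF M N] by blast
  have 4: "locally_MN E VX VY X Y M N (U_c E VX VY X Y c M N)" using part4[OF c M N] .
  have 5: "closedin (perm_topology X (Sym X)) M \<and> closedin (perm_topology Y (Sym Y)) N \<longrightarrow>
           U_c E VX VY X Y c M N \<subseteq> Aut E \<and> perm_group UNIV (U_c E VX VY X Y c M N)
           \<and> closedin (perm_topology UNIV (Aut E)) (U_c E VX VY X Y c M N)"
    using U_sub U_group[OF c M N] part5[OF c M N] by blast
  show ?thesis using 1 2 3 4 5 by blast
qed

end
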